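(* Let $\delta>0$, suppose $\lim_kr_k=r\in[0,1]$, and let $\xi_k=I_k-(\theta(M_k)-\theta(M_{k-1}))$ for $k\ge1$. (a) If $r<1$, then $\frac{1}{b_n^3}\sum_{k=1}^nE[|\xi_k|^3\mid\mathcal{F}_{k-1}]\to0$ in probability, where $b_n^2=\log n$. (b) If $r=1$ and $\sum_{k=1}^\infty e_k=\infty$, where $e_k=(1-r_k)(1-r_{k+1})\cdots(1-r_{k+\delta-1})$, then $\frac{1}{b_n^3}\sum_{k=1}^nE[|\xi_k|^3\mid\mathcal{F}_{k-1}]\to0$ in probability, where $b_n^2=\sum_{k=1}^{m(n)}e_k$.
   Context: Let $\{X_n,n\ge1\}$ be independent, identically distributed random variables with values in $\mathbb{Z}_+=\{0,1,2,\dots\}$ such that $p_k=P[X_1=k]>0$ for every $k\in\mathbb{Z}_+$ (set $p_m=0$ for integers $m\le -1$). For $k\in\mathbb{Z}_+$ let $y_k=\sum_{i>k}p_i$, and set $y_m=1$ for integers $m\le-1$. Let $r_k=p_k/y_{k-1}$, $k\in\mathbb{Z}_+$, and $m(t)=\min\{j\in\mathbb{Z}_+: y_j<1/t\}$ for $t>0$. For the fixed integer $\delta$ define $s_k=p_{k+\delta}/y_{k-1}$ and $\theta(k)=\sum_{i=0}^k s_i$ for $k\in\mathbb{Z}_+$. Let $M_0=0$ and $M_n=\max\{X_1,\dots,X_n\}$ for $n\ge1$. Let $I_k=\mathbf{1}_{\{X_k>M_{k-1}+\delta\}}$. Let $\mathcal{F}_0=\{\emptyset,\Omega\}$ and $\mathcal{F}_n=\sigma(X_1,\dots,X_n)$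 for $n\ge1$. *)

theory Defs
  imports "HOL-Probability.Probability"
begin

definition yv :: "(nat \<Rightarrow> real) \<Rightarrow> int \<Rightarrow> real" where
  "yv p m = (if m < 0 then 1 else (\<Sum>i. p (nat m + 1 + i)))"

definition rr :: "(nat \<Rightarrow> real) \<Rightarrow> nat \<Rightarrow> real" where
  "rr p k = p k / yv p (int k - 1)"

definition mm :: "(nat \<Rightarrow> real) \<Rightarrow> real \<Rightarrow> nat" where
  "mm p t = (LEAST j::nat. yv p (int j) < 1 / t)"

definition ss :: "(nat \<Rightarrow> real) \<Rightarrow> nat \<Rightarrow> nat \<Rightarrow> real" where
  "ss p \<delta> k = p (k + \<delta>) / yv p (int k - 1)"

definition theta :: "(nat \<Rightarrow> real) \<Rightarrow> nat \<Rightarrow> nat \<Rightarrow> real" where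
  "theta p \<delta> k = (\<Sum>i\<le>k. ss p \<delta> i)"

definition maxX :: "(nat \<Rightarrow> 'a \<Rightarrow> nat) \<Rightarrow> nat \<Rightarrow> 'a \<Rightarrow> nat" where
  "maxX X n \<omega> = Max (insert 0 ((\<lambda>i. X i \<omega>) ` {1..n}))"

definition indI :: "(nat \<Rightarrow> 'a \<Rightarrow> nat) \<Rightarrow> nat \<Rightarrow> nat \<Rightarrow> 'a \<Rightarrow> real" where
  "indI X \<delta> k \<omega> = (if X k \<omega> > maxX X (k - 1) \<omega> + \<delta> then 1 else 0)"

definition xi :: "(nat \<Rightarrow> real) \<Rightarrow> (nat \<Rightarrow> 'a \<Rightarrow> nat) \<Rightarrow> nat \<Rightarrow> nat \<Rightarrow> 'a \<Rightarrow> real" where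
  "xi p X \<delta> k \<omega> = indI X \<delta> k \<omega>
      - (theta p \<delta> (maxX X k \<omega>) - theta p \<delta> (maxX X (k - 1) \<omega>))"

definition ee :: "(nat \<Rightarrow> real) \<Rightarrow> nat \<Rightarrow> nat \<Rightarrow> real" where
  "ee p \<delta> k = (\<Prod>j\<in>{k..<k + \<delta>}. 1 - rr p j)"

definition filt :: "'a measure \<Rightarrow> (nat \<Rightarrow> 'a \<Rightarrow> nat) \<Rightarrow> nat \<Rightarrow> 'a measure" where
  "filt M X n = sigma (space M) {X i -` A \<inter> space M | i A. i \<in> {1..n}}"

definition Ssum :: "'a measure \<Rightarrow> (nat \<Rightarrow> real) \<Rightarrow> (nat \<Rightarrow> 'a \<Rightarrow> nat) \<Rightarrow> nat \<Rightarrow> (nat \<Rightarrow> real) \<Rightarrow> nat \<Rightarrow> 'a \<Rightarrow> real" where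
  "Ssum M p X \<delta> b n \<omega> = (1 / b n ^ 3) *
     (\<Sum>k=1..n. real_cond_exp M (filt M X (k - 1)) (\<lambda>\<omega>'. \<bar>xi p X \<delta> k \<omega>'\<bar> ^ 3) \<omega>)"

definition conv_in_prob :: "'a measure \<Rightarrow> (nat \<Rightarrow> 'a \<Rightarrow> real) \<Rightarrow> bool" where
  "conv_in_prob M Y \<longleftrightarrow>
     (\<forall>e>0. (\<lambda>n. measure M {\<omega> \<in> space M. \<bar>Y n \<omega>\<bar> > e}) \<longlonglongrightarrow> 0)"

end

theory Submission
  imports Defs
begin


locale pd =
  fixes p :: "nat \<Rightarrow> real"
  assumes pos: "\<And>k. p k > 0" and sums1: "p sums 1"
begin

definition y :: "nat \<Rightarrow> real" where "y m = yv p (int m)"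
definition Y :: "nat \<Rightarrow> real" where "Y m = yv p (int m - 1)"

lemma summ: "summable p" using sums1 sums_summable by blast
lemma suminf1: "suminf p = 1" using sums1 sums_unique by metis

lemma y_alt: "y m = (\<Sum>i. p (m + 1 + i))"
  unfolding y_def yv_def by simp

lemma summ_shift: "summable (\<lambda>i. p (m + i))"
  using summable_ignore_initial_segment[OF summ, of m] by (simp add: add.commute)

lemma y_alt2: "y m = 1 - (\<Sum>i<Suc m. p i)"
proof -
  have "(\<Sum>n. p (n + Suc m)) = suminf p - (\<Sum>i<Suc m. p i)"
    by (rule suminf_minus_initial_segment[OF summ])
  then show ?thesis unfolding y_alt suminf1 by (simp add: add.commute)
qed

lemma Y0: "Y 0 = 1" unfolding Y_def yv_def by simp
lemma YSuc: "Y (Suc m) = y m" unfolding Y_def y_def by simp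

lemma y_pos: "y m > 0"
  unfolding y_alt by (rule suminf_pos) (use summ_shift[of "m+1"] pos in auto)

lemma Y_pos: "Y m > 0" by (cases m) (auto simp: Y0 YSuc y_pos)

lemma y_eq: "y m = Y m - p m"
proof (cases m)
  case 0 then show ?thesis by (simp add: y_alt2 Y0)
next
  case (Suc k) then show ?thesis by (simp add: y_alt2 YSuc)
qed

lemma Y_Suc_eq: "Y (Suc m) = Y m - p m" using y_eq YSuc by simp

lemma p_le_Y: "p m \<le> Y m" using y_eq y_pos by (metis diff_ge_0_iff_ge less_eq_real_def)

lemma Y_dec: "m \<le> n \<Longrightarrow> Y n \<le> Y m"
proof (induction n rule: dec_induct)
  case (step n) then show ?case using Y_Suc_eq[of n] pos[of n] by linarith
qed simp

lemma Y_le1: "Y m \<le> 1" using Y_dec[of 0 m] Y0 by simp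
lemma y_le_Y: "y m \<le> Y m" using YSuc Y_dec[of m "Suc m"] by simp
lemma y_dec: "m \<le> n \<Longrightarrow> y n \<le> y m" using Y_dec[of "Suc m" "Suc n"] by (simp add: YSuc)

lemma y_lim: "y \<longlonglongrightarrow> 0"
proof -
  have "(\<lambda>m. \<Sum>i<Suc m. p i) \<longlonglongrightarrow> 1"
    using sums1 unfolding sums_def by (rule LIMSEQ_Suc)
  then have "(\<lambda>m. 1 - (\<Sum>i<Suc m. p i)) \<longlonglongrightarrow> 1 - 1"
    by (intro tendsto_intros)
  then show ?thesis unfolding y_alt2 by simp
qed

lemma rr_eq: "rr p m = p m / Y m" unfolding rr_def Y_def by simp
lemma ss_eq: "ss p d m = p (m + d) / Y m" unfolding ss_def Y_def by simp

lemma one_minus_rr: "1 - rr p m = Y (Suc m) / Y m"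
  using Y_pos[of m] by (simp add: rr_eq Y_Suc_eq field_simps)

lemma rr_nonneg: "rr p m \<ge> 0" using pos[of m] Y_pos[of m] by (simp add: rr_eq)
lemma rr_less1: "rr p m < 1" using one_minus_rr[of m] Y_pos[of m] Y_pos[of "Suc m"]
  by (smt (verit) divide_pos_pos)

lemma ee_eq: "ee p d k = Y (k + d) / Y k"
proof (induction d)
  case 0 then show ?case using Y_pos[of k] by (simp add: ee_def)
next
  case (Suc d)
  have "ee p (Suc d) k = ee p d k * (1 - rr p (k + d))"
    unfolding ee_def by (simp add: prod.atLeastLessThan_Suc)
  also have "\<dots> = Y (k + Suc d) / Y k"
    using Suc Y_pos[of "k+d"] by (simp add: one_minus_rr)
  finally show ?case .
qed

lemma ee_nonneg: "ee p d k \<ge> 0" using Y_pos by (simp add: ee_eq less_eq_real_def)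
lemma ee_le1: "ee p d k \<le> 1" using Y_pos[of k] Y_dec[of k "k+d"] by (simp add: ee_eq)

lemma ss_nonneg: "ss p d m \<ge> 0" using pos Y_pos by (simp add: ss_eq less_eq_real_def)
lemma ss_le_ee: "ss p d m \<le> ee p d m"
  using p_le_Y[of "m+d"] Y_pos[of m] by (simp add: ss_eq ee_eq divide_right_mono)
lemma ss_le1: "ss p d m \<le> 1" using ss_le_ee ee_le1 order_trans by blast
lemma ss_le_rr: "ss p d m \<le> rr p (m + d)"
  using Y_dec[of m "m+d"] Y_pos[of "m+d"] pos[of "m+d"] by (simp add: ss_eq rr_eq frac_le)

lemma theta_diff: "m \<le> j \<Longrightarrow> theta p d j - theta p d m = (\<Sum>i\<in>{m<..j}. ss p d i)"
proof -
  assume "m \<le> j"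
  then have "{..j} = {..m} \<union> {m<..j}" by auto
  then have "theta p d j = theta p d m + (\<Sum>i\<in>{m<..j}. ss p d i)"
    unfolding theta_def by (metis (no_types) sum.union_disjoint finite_atMost finite_greaterThanAtMost
      Int_emptyI greaterThanAtMost_iff atMost_iff not_le)
  then show ?thesis by simp
qed

end


lemma tele_ennreal:
  fixes f t :: "nat \<Rightarrow> real"
  assumes f0: "\<And>j. 0 \<le> f j" and ft: "\<And>j. f j \<le> t j - t (Suc j)" and t0: "\<And>j. 0 \<le> t j"
  shows "(\<Sum>j. ennreal (f j)) \<le> ennreal (t 0)"
proof (rule suminf_le_const[OF summableI])
  fix n
  have "(\<Sum>j<n. ennreal (f j)) = ennreal (\<Sum>j<n. f j)" using f0 by simp
  also have "(\<Sum>j<n. f j) \<le> (\<Sum>j<n. t j - t (Suc j))" by (rule sum_mono) (use ft in auto)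
  also have "\<dots> = t 0 - t n" by (rule sum_lessThan_telescope')
  also have "\<dots> \<le> t 0" using t0[of n] by simp
  finally show "(\<Sum>j<n. ennreal (f j)) \<le> ennreal (t 0)" by (simp add: ennreal_leI)
qed

context pd
begin

definition Phi :: "nat \<Rightarrow> nat \<Rightarrow> nat \<Rightarrow> real" where
  "Phi d m j = (if j > m + d then 1 else 0) - (theta p d (max m j) - theta p d m)"

definition hh :: "nat \<Rightarrow> nat \<Rightarrow> ennreal" where
  "hh d m = (\<Sum>j. ennreal (p j * \<bar>Phi d m j\<bar> ^ 3))"

definition DD :: "nat \<Rightarrow> nat \<Rightarrow> nat \<Rightarrow> real" where
  "DD d m j = (\<Sum>i\<in>{m<..j}. ss p d i)"

lemma DD_nonneg: "DD d m j \<ge> 0" unfolding DD_def by (rule sum_nonneg) (use ss_nonneg in auto)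

lemma DD_le_card: "DD d m j \<le> real (j - m)"
proof -
  have "DD d m j \<le> of_nat (card {m<..j}) * 1"
    unfolding DD_def by (rule sum_bounded_above) (use ss_le1 in auto)
  then show ?thesis by simp
qed

lemma Phi_zero: "j \<le> m \<Longrightarrow> Phi d m j = 0"
  unfolding Phi_def by (simp add: max_absorb1)

lemma Phi_gt: "m < j \<Longrightarrow> Phi d m j = (if j > m + d then 1 else 0) - DD d m j"
  unfolding Phi_def DD_def by (simp add: max_absorb2 theta_diff)

lemma Phi_abs_le: "m < j \<Longrightarrow> \<bar>Phi d m j\<bar> \<le> 1 + DD d m j"
  using DD_nonneg[of d m j] by (auto simp: Phi_gt)

lemma Phi_abs_small: "m < j \<Longrightarrow> j \<le> m + d \<Longrightarrow> \<bar>Phi d m j\<bar> = DD d m j"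
  using DD_nonneg[of d m j] by (simp add: Phi_gt)

lemma Phi3_le: "m < j \<Longrightarrow> \<bar>Phi d m j\<bar> ^ 3 \<le> (1 + DD d m j) ^ 3"
  by (rule power_mono[OF Phi_abs_le]) auto

lemma f_nonneg: "0 \<le> p j * \<bar>Phi d m j\<bar> ^ 3" using pos[of j] by simp

lemma two_piece:
  fixes f :: "nat \<Rightarrow> real"
  assumes f0: "\<And>j. 0 \<le> f j" and fz: "\<And>j. j \<le> m \<Longrightarrow> f j = 0"
    and f1: "\<And>j. m < j \<Longrightarrow> j \<le> b \<Longrightarrow> f j \<le> A * p j"
    and f2: "\<And>j. b < j \<Longrightarrow> f j \<le> G * (1/2) ^ (j - b - 1)"
    and A: "A \<ge> 0" and G: "G \<ge> 0" and mb: "m \<le> b"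
  shows "(\<Sum>j. ennreal (f j)) \<le> ennreal (A * y m + 2 * G)"
proof -
  define t where "t j = A * Y (min (max j (Suc m)) (Suc b)) + 2 * G * (1/2) ^ (max j (Suc b) - Suc b)" for j
  have "(\<Sum>j. ennreal (f j)) \<le> ennreal (t 0)"
  proof (rule tele_ennreal[OF f0])
    fix j
    show "0 \<le> t j" unfolding t_def using A G Y_pos by (intro add_nonneg_nonneg mult_nonneg_nonneg) (auto simp: less_eq_real_def)
    show "f j \<le> t j - t (Suc j)"
    proof (cases "j \<le> m")
      case True
      then have "t j = t (Suc j)" unfolding t_def using mb by (simp add: max_def min_def)
      then show ?thesis using fz[OF True] by simp
    next
      case False
      show ?thesis
      proof (cases "j \<le> b")
        case True
        then have "t j - t (Suc j) = A * (Y j - Y (Suc j))"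
          unfolding t_def using False True by (cases "j = Suc m") (auto simp: max_def min_def algebra_simps)
        then show ?thesis using f1[of j] False True by (simp add: Y_Suc_eq)
      next
        case False2: False
        have "t j - t (Suc j) = 2 * G * ((1/2) ^ (j - Suc b) - (1/2) ^ (Suc j - Suc b))"
          unfolding t_def using False False2 mb by (cases "j = Suc b") (auto simp: max_def min_def algebra_simps)
        also have "Suc j - Suc b = Suc (j - Suc b)" using False2 by simp
        also have "2 * G * ((1/2) ^ (j - Suc b) - (1/2) ^ Suc (j - Suc b)) = G * (1/2) ^ (j - b - 1)"
          by (simp add: algebra_simps)
        finally show ?thesis using f2[of j] False2 by simp
      qed
    qed
  qed
  also have "t 0 = A * y m + 2 * G" unfolding t_def using mb by (simp add: YSuc)
  finally show ?thesis .
qed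

lemma Y_geom:
  assumes m0: "\<And>l. l \<ge> m0 \<Longrightarrow> 16 * Y (Suc l) \<le> Y l" and "a \<ge> m0"
  shows "Y (Suc a + k) \<le> Y (Suc a) * (1/16) ^ k"
proof (induction k)
  case (Suc k)
  have "16 * Y (Suc (Suc a + k)) \<le> Y (Suc a + k)" using m0[of "Suc a + k"] assms(2) by simp
  then show ?case using Suc by simp
qed simp

lemma pow_le: "(1 + real t) ^ 3 \<le> 8 ^ t"
proof -
  have "1 + real t \<le> 2 ^ t"
  proof (induction t)
    case (Suc t) then show ?case by simp
  qed simp
  then have "(1 + real t) ^ 3 \<le> (2 ^ t) ^ 3" by (rule power_mono) simp
  also have "\<dots> = 8 ^ t" by (simp flip: power_mult power_mult_distrib add: mult.commute[of t 3] power_mult)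
  finally show ?thesis .
qed

lemma tailB:
  assumes m0: "\<And>l. l \<ge> m0 \<Longrightarrow> 16 * Y (Suc l) \<le> Y l" and a: "a \<ge> m0" and L: "L \<ge> 0" and j: "a < j"
  shows "p j * (L + real (j - a)) ^ 3 \<le> (L + 1) ^ 3 * y a * (1/2) ^ (j - a - 1)"
proof -
  define t where "t = j - a - 1"
  have jt: "j = Suc a + t" using j unfolding t_def by simp
  have "p j \<le> Y j" by (rule p_le_Y)
  also have "\<dots> \<le> y a * (1/16) ^ t" using Y_geom[OF m0 a, of t] jt by (simp add: YSuc)
  finally have pj: "p j \<le> y a * (1/16) ^ t" .
  have "L + real (j - a) = L + 1 + real t" using jt by simp
  also have "\<dots> \<le> (L + 1) * (1 + real t)" using L by (simp add: algebra_simps)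
  finally have "(L + real (j - a)) ^ 3 \<le> ((L + 1) * (1 + real t)) ^ 3"
    by (rule power_mono) (use L in simp)
  also have "\<dots> = (L + 1) ^ 3 * (1 + real t) ^ 3" by (simp add: power_mult_distrib)
  also have "\<dots> \<le> (L + 1) ^ 3 * 8 ^ t" by (rule mult_left_mono[OF pow_le]) (use L in simp)
  finally have c: "(L + real (j - a)) ^ 3 \<le> (L + 1) ^ 3 * 8 ^ t" .
  have "p j * (L + real (j - a)) ^ 3 \<le> (y a * (1/16) ^ t) * ((L + 1) ^ 3 * 8 ^ t)"
    by (rule mult_mono[OF pj c]) (use pos[of j] y_pos[of a] L in auto)
  also have "\<dots> = (L + 1) ^ 3 * y a * ((1/16) ^ t * 8 ^ t)" by simp
  also have "(1/16::real) ^ t * 8 ^ t = (1/2) ^ t" by (simp flip: power_mult_distrib)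
  finally show ?thesis unfolding t_def by simp
qed

end


context pd
begin

definition EE :: "nat \<Rightarrow> nat \<Rightarrow> real" where
  "EE d m = (\<Sum>i\<in>{m<..m+d}. ee p d i)"

lemma EE_nonneg: "EE d m \<ge> 0" unfolding EE_def by (rule sum_nonneg) (use ee_nonneg in auto)

lemma EE_le: "EE d m \<le> real d"
proof -
  have "EE d m \<le> of_nat (card {m<..m+d}) * 1"
    unfolding EE_def by (rule sum_bounded_above) (use ee_le1 in auto)
  then show ?thesis by simp
qed

lemma DD_le_EE: assumes "j \<le> m + d" shows "DD d m j \<le> EE d m"
proof -
  have "DD d m j \<le> (\<Sum>i\<in>{m<..j}. ee p d i)" unfolding DD_def by (rule sum_mono) (rule ss_le_ee)
  also have "\<dots> \<le> EE d m" unfolding EE_def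
    by (rule sum_mono2) (use assms ee_nonneg in auto)
  finally show ?thesis .
qed

lemma ee_Suc_le_EE: "d > 0 \<Longrightarrow> ee p d (Suc m) \<le> EE d m"
  unfolding EE_def by (rule member_le_sum) (use ee_nonneg in auto)

lemma hh_b1:
  assumes m0: "\<And>l. l \<ge> m0 \<Longrightarrow> 16 * Y (Suc l) \<le> Y l" and d: "d > 0" and mm0: "m \<ge> m0"
  shows "hh d m \<le> ennreal ((real d ^ 2 + 2 * (2 + real d) ^ 3) * y m * EE d m)"
proof -
  have "hh d m \<le> ennreal ((real d ^ 2 * EE d m) * y m + 2 * ((2 + real d) ^ 3 * y (m + d)))"
    unfolding hh_def
  proof (rule two_piece[where b = "m + d"])
    fix j
    show "0 \<le> p j * \<bar>Phi d m j\<bar> ^ 3" by (rule f_nonneg)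
    show "j \<le> m \<Longrightarrow> p j * \<bar>Phi d m j\<bar> ^ 3 = 0" by (simp add: Phi_zero)
    show "m + d < j \<Longrightarrow> p j * \<bar>Phi d m j\<bar> ^ 3 \<le> (2 + real d) ^ 3 * y (m + d) * (1/2) ^ (j - (m + d) - 1)"
    proof -
      assume jd: "m + d < j"
      have "\<bar>Phi d m j\<bar> ^ 3 \<le> (1 + DD d m j) ^ 3" by (rule Phi3_le) (use jd in simp)
      also have "\<dots> \<le> (1 + real d + real (j - (m + d))) ^ 3"
        by (rule power_mono) (use DD_le_card[of d m j] jd DD_nonneg[of d m j] in auto)
      finally have "p j * \<bar>Phi d m j\<bar> ^ 3 \<le> p j * (1 + real d + real (j - (m + d))) ^ 3"
        using pos[of j] by (simp add: mult_left_mono)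
      also have "\<dots> \<le> (1 + real d + 1) ^ 3 * y (m + d) * (1/2) ^ (j - (m + d) - 1)"
        by (rule tailB[OF m0]) (use mm0 jd in auto)
      finally show ?thesis by (simp add: add.commute add.left_commute)
    qed
    assume "m < j"
    show "j \<le> m + d \<Longrightarrow> p j * \<bar>Phi d m j\<bar> ^ 3 \<le> real d ^ 2 * EE d m * p j"
    proof -
      assume jd: "j \<le> m + d"
      have D0: "0 \<le> DD d m j" by (rule DD_nonneg)
      have Dd: "DD d m j \<le> real d" using DD_le_card[of d m j] jd by simp
      have "\<bar>Phi d m j\<bar> ^ 3 = DD d m j ^ 2 * DD d m j"
        using Phi_abs_small[OF \<open>m < j\<close> jd] by (simp add: power3_eq_cube power2_eq_square)
      also have "\<dots> \<le> real d ^ 2 * EE d m"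
        by (rule mult_mono) (use D0 Dd DD_le_EE[OF jd] in \<open>auto intro: power_mono\<close>)
      finally show ?thesis using pos[of j] by (simp add: mult.commute mult_left_mono)
    qed
  qed (use EE_nonneg[of d m] y_pos[of "m+d"] in \<open>simp_all add: less_eq_real_def[symmetric]\<close>)
  also have "y (m + d) = y m * ee p d (Suc m)"
    using y_pos[of m] by (simp add: ee_eq YSuc)
  also have "real d ^ 2 * EE d m * y m + 2 * ((2 + real d) ^ 3 * (y m * ee p d (Suc m)))
      \<le> (real d ^ 2 + 2 * (2 + real d) ^ 3) * y m * EE d m"
  proof -
    have "(2 + real d) ^ 3 * (y m * ee p d (Suc m)) \<le> (2 + real d) ^ 3 * (y m * EE d m)"
      using ee_Suc_le_EE[OF d, of m] y_pos[of m] by (intro mult_left_mono) auto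
    then show ?thesis by (simp add: algebra_simps)
  qed
  then have "ennreal (real d ^ 2 * EE d m * y m + 2 * ((2 + real d) ^ 3 * (y m * ee p d (Suc m))))
      \<le> ennreal ((real d ^ 2 + 2 * (2 + real d) ^ 3) * y m * EE d m)" by (rule ennreal_leI)
  finally show ?thesis .
qed

lemma hh_b_small:
  assumes m0: "\<And>l. l \<ge> m0 \<Longrightarrow> 16 * Y (Suc l) \<le> Y l" and mm0: "m < m0"
  shows "hh d m \<le> ennreal (((1 + real m0) ^ 3 + 2 * (2 + real m0) ^ 3) * y m)"
proof -
  have "hh d m \<le> ennreal ((1 + real m0) ^ 3 * y m + 2 * ((2 + real m0) ^ 3 * y m0))"
    unfolding hh_def
  proof (rule two_piece[where b = "m0"])
    fix j
    show "0 \<le> p j * \<bar>Phi d m j\<bar> ^ 3" by (rule f_nonneg)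
    show "j \<le> m \<Longrightarrow> p j * \<bar>Phi d m j\<bar> ^ 3 = 0" by (simp add: Phi_zero)
    show "m0 < j \<Longrightarrow> p j * \<bar>Phi d m j\<bar> ^ 3 \<le> (2 + real m0) ^ 3 * y m0 * (1/2) ^ (j - m0 - 1)"
    proof -
      assume jd: "m0 < j"
      have P: "\<bar>Phi d m j\<bar> ^ 3 \<le> (1 + real (j - m)) ^ 3"
        using Phi3_le[of m j d] power_mono[of "1 + DD d m j" "1 + real (j - m)" 3]
          DD_le_card[of d m j] DD_nonneg[of d m j] jd mm0 by linarith
      have "p j * \<bar>Phi d m j\<bar> ^ 3 \<le> p j * ((1 + real (m0 - m)) + real (j - m0)) ^ 3"
        using P pos[of j] jd mm0 by (simp add: mult_left_mono of_nat_diff)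
      also have "\<dots> \<le> ((1 + real (m0 - m)) + 1) ^ 3 * y m0 * (1/2) ^ (j - m0 - 1)"
        by (rule tailB[OF m0]) (use jd in auto)
      also have "\<dots> \<le> (2 + real m0) ^ 3 * y m0 * (1/2) ^ (j - m0 - 1)"
        by (intro mult_right_mono power_mono) (use y_pos[of m0] in auto)
      finally show ?thesis .
    qed
    assume "m < j"
    have P: "\<bar>Phi d m j\<bar> ^ 3 \<le> (1 + real (j - m)) ^ 3"
      using Phi3_le[OF \<open>m < j\<close>, of d] power_mono[of "1 + DD d m j" "1 + real (j - m)" 3]
        DD_le_card[of d m j] DD_nonneg[of d m j] by linarith
    show "j \<le> m0 \<Longrightarrow> p j * \<bar>Phi d m j\<bar> ^ 3 \<le> (1 + real m0) ^ 3 * p j"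
    proof -
      assume "j \<le> m0"
      have "(1 + real (j - m)) ^ 3 \<le> (1 + real m0) ^ 3" by (rule power_mono) (use \<open>j \<le> m0\<close> in auto)
      then show ?thesis using P pos[of j] by (simp add: mult.commute mult_left_mono)
    qed
  qed (use y_pos mm0 in \<open>auto simp: less_eq_real_def\<close>)
  also have "\<dots> \<le> ennreal (((1 + real m0) ^ 3 + 2 * (2 + real m0) ^ 3) * y m)"
    using y_dec[of m m0] mm0 by (intro ennreal_leI) (auto simp: algebra_simps intro!: mult_left_mono)
  finally show ?thesis .
qed

lemma hh_b_global:
  assumes m0: "\<And>l. l \<ge> m0 \<Longrightarrow> 16 * Y (Suc l) \<le> Y l" and d: "d > 0"
  shows "hh d m \<le> ennreal (((real d ^ 2 + 2 * (2 + real d) ^ 3) * real d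
             + ((1 + real m0) ^ 3 + 2 * (2 + real m0) ^ 3)) * y m)"
proof (cases "m < m0")
  case True
  have "hh d m \<le> ennreal (((1 + real m0) ^ 3 + 2 * (2 + real m0) ^ 3) * y m)"
    by (rule hh_b_small[OF m0 True])
  also have "\<dots> \<le> ennreal (((real d ^ 2 + 2 * (2 + real d) ^ 3) * real d
             + ((1 + real m0) ^ 3 + 2 * (2 + real m0) ^ 3)) * y m)"
    using y_pos[of m] by (intro ennreal_leI mult_right_mono) auto
  finally show ?thesis .
next
  case False
  have "hh d m \<le> ennreal ((real d ^ 2 + 2 * (2 + real d) ^ 3) * y m * EE d m)"
    using hh_b1[OF m0 d] False by simp
  also have "\<dots> \<le> ennreal (((real d ^ 2 + 2 * (2 + real d) ^ 3) * real d
             + ((1 + real m0) ^ 3 + 2 * (2 + real m0) ^ 3)) * y m)"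
  proof (intro ennreal_leI)
    let ?C = "real d ^ 2 + 2 * (2 + real d) ^ 3"
    have "?C * y m * EE d m \<le> ?C * y m * real d"
      using EE_le[of d m] y_pos[of m] by (intro mult_left_mono) auto
    also have "\<dots> \<le> (?C * real d + ((1 + real m0) ^ 3 + 2 * (2 + real m0) ^ 3)) * y m"
      using y_pos[of m] by (simp add: algebra_simps)
    finally show "?C * y m * EE d m \<le> (?C * real d + ((1 + real m0) ^ 3 + 2 * (2 + real m0) ^ 3)) * y m" .
  qed
  finally show ?thesis .
qed

end


context pd
begin

lemma Y_Suc_mult: "Y (Suc l) = Y l * (1 - rr p l)"
  using one_minus_rr[of l] Y_pos[of l] by simp

lemma Y_exp: "a \<le> b \<Longrightarrow> Y b \<le> Y a * exp (-(\<Sum>l\<in>{a..<b}. rr p l))"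
proof (induction b rule: dec_induct)
  case base then show ?case by simp
next
  case (step b)
  have "Y (Suc b) = Y b * (1 - rr p b)" by (rule Y_Suc_mult)
  also have "\<dots> \<le> Y b * exp (- rr p b)"
    using exp_ge_add_one_self[of "- rr p b"] Y_pos[of b] by (intro mult_left_mono) auto
  also have "\<dots> \<le> Y a * exp (-(\<Sum>l\<in>{a..<b}. rr p l)) * exp (- rr p b)"
    by (rule mult_right_mono[OF step.IH]) simp
  also have "\<dots> = Y a * exp (-(\<Sum>l\<in>{a..<Suc b}. rr p l))"
  proof -
    have "(\<Sum>l\<in>{a..<Suc b}. rr p l) = (\<Sum>l\<in>{a..<b}. rr p l) + rr p b"
      using step.hyps by simp
    then have "exp (-(\<Sum>l\<in>{a..<Suc b}. rr p l)) = exp (-(\<Sum>l\<in>{a..<b}. rr p l)) * exp (- rr p b)"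
      by (simp add: exp_add[symmetric])
    then show ?thesis by simp
  qed
  finally show ?case .
qed

lemma cube_exp: fixes x :: real shows "x \<ge> 0 \<Longrightarrow> (1 + x) ^ 3 \<le> 216 * exp (x / 2)"
proof -
  assume x: "x \<ge> 0"
  have "1 + x \<le> 6 * exp (x / 6)" using exp_ge_add_one_self[of "x/6"] x by linarith
  then have "(1 + x) ^ 3 \<le> (6 * exp (x / 6)) ^ 3" by (rule power_mono) (use x in simp)
  also have "\<dots> = 216 * exp (x / 6) ^ 3" by (simp add: power_mult_distrib)
  also have "exp (x / 6) ^ 3 = exp (real 3 * (x / 6))" by (rule exp_of_nat_mult[symmetric])
  finally show ?thesis by simp
qed

lemma hh_a:
  assumes c: "c > 0" and rc: "\<And>l. rr p l \<le> 1 - c"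
  shows "hh d m \<le> ennreal ((432 / sqrt (c ^ Suc d)) * y m)"
proof -
  define K where "K = 216 / sqrt (c ^ Suc d)"
  have K0: "K \<ge> 0" unfolding K_def using c by simp
  have Yc: "Y (j + k) \<ge> c ^ k * Y j" for j k
  proof (induction k)
    case (Suc k)
    have "Y (j + Suc k) = Y (j + k) * (1 - rr p (j + k))" using Y_Suc_mult by simp
    also have "\<dots> \<ge> (c ^ k * Y j) * c"
      using Suc rc[of "j+k"] c Y_pos[of j] Y_pos[of "j+k"] by (intro mult_mono) auto
    finally show ?case by (simp add: algebra_simps)
  qed simp
  define t where "t j = 2 * K * sqrt (y m) * sqrt (Y (max j (Suc m)))" for j
  have "hh d m \<le> ennreal (t 0)"
    unfolding hh_def
  proof (rule tele_ennreal[OF f_nonneg])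
    fix j
    show "0 \<le> t j" unfolding t_def using K0 y_pos[of m] Y_pos[of "max j (Suc m)"]
      by (intro mult_nonneg_nonneg) auto
    show "p j * \<bar>Phi d m j\<bar> ^ 3 \<le> t j - t (Suc j)"
    proof (cases "j \<le> m")
      case True
      then have "t j = t (Suc j)" unfolding t_def by (simp add: max_def)
      then show ?thesis using True by (simp add: Phi_zero)
    next
      case False
      then have mj: "m < j" by simp
      have tj: "t j - t (Suc j) = 2 * K * sqrt (y m) * (sqrt (Y j) - sqrt (Y (Suc j)))"
        unfolding t_def using mj by (cases "j = Suc m") (auto simp: max_def algebra_simps)
      have "DD d m j \<le> (\<Sum>i\<in>{Suc m..<Suc j}. rr p (i + d))"
      proof -
        have e: "{m<..j} = {Suc m..<Suc j}" by auto
        show ?thesis unfolding DD_def e by (rule sum_mono[OF ss_le_rr])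
      qed
      also have "\<dots> = (\<Sum>l\<in>{Suc m + d..<Suc j + d}. rr p l)"
        by (rule sum.shift_bounds_nat_ivl[symmetric])
      finally have DS: "DD d m j \<le> (\<Sum>l\<in>{Suc m + d..<Suc j + d}. rr p l)" .
      have "Y (Suc j + d) \<le> Y (Suc m + d) * exp (-(\<Sum>l\<in>{Suc m + d..<Suc j + d}. rr p l))"
        by (rule Y_exp) (use mj in simp)
      then have "exp (\<Sum>l\<in>{Suc m + d..<Suc j + d}. rr p l) \<le> Y (Suc m + d) / Y (Suc j + d)"
        using Y_pos[of "Suc j + d"] by (simp add: exp_minus field_simps)
      also have "\<dots> \<le> y m / (c ^ Suc d * Y j)"
      proof (rule frac_le)
        show "0 \<le> y m" using y_pos[of m] by simp
        show "Y (Suc m + d) \<le> y m" using Y_dec[of "Suc m" "Suc m + d"] by (simp add: YSuc)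
        show "0 < c ^ Suc d * Y j" using c Y_pos[of j] by simp
        show "c ^ Suc d * Y j \<le> Y (Suc j + d)" using Yc[where j=j and k="Suc d"] by (simp add: add.commute)
      qed
      finally have eD: "exp (DD d m j) \<le> y m / (c ^ Suc d * Y j)"
        using DS by (meson exp_le_cancel_iff order_trans)
      have "exp (DD d m j / 2) \<le> sqrt (y m / (c ^ Suc d * Y j))"
      proof (rule real_le_rsqrt)
        have "exp (DD d m j / 2) ^ 2 = exp (DD d m j)"
          by (simp add: exp_of_nat_mult[symmetric])
        then show "exp (DD d m j / 2) ^ 2 \<le> y m / (c ^ Suc d * Y j)" using eD by simp
      qed
      also have "\<dots> = sqrt (y m) / (sqrt (c ^ Suc d) * sqrt (Y j))"
        by (simp add: real_sqrt_divide real_sqrt_mult)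
      finally have eD2: "exp (DD d m j / 2) \<le> sqrt (y m) / (sqrt (c ^ Suc d) * sqrt (Y j))" .
      have "\<bar>Phi d m j\<bar> ^ 3 \<le> (1 + DD d m j) ^ 3" by (rule Phi3_le[OF mj])
      also have "\<dots> \<le> 216 * exp (DD d m j / 2)" by (rule cube_exp[OF DD_nonneg])
      also have "\<dots> \<le> 216 * (sqrt (y m) / (sqrt (c ^ Suc d) * sqrt (Y j)))"
        using eD2 by simp
      also have "\<dots> = K * sqrt (y m) / sqrt (Y j)" unfolding K_def by simp
      finally have P3: "\<bar>Phi d m j\<bar> ^ 3 \<le> K * sqrt (y m) / sqrt (Y j)" .
      have sY: "sqrt (Y j) > 0" using Y_pos[of j] by simp
      have sY1: "sqrt (Y (Suc j)) \<le> sqrt (Y j)" using Y_dec[of j "Suc j"] by simp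
      have pj: "p j = (sqrt (Y j) - sqrt (Y (Suc j))) * (sqrt (Y j) + sqrt (Y (Suc j)))"
        using Y_pos[of j] Y_pos[of "Suc j"] by (simp add: algebra_simps Y_Suc_eq)
      have "p j / sqrt (Y j) \<le> 2 * (sqrt (Y j) - sqrt (Y (Suc j)))"
      proof -
        have "p j \<le> (sqrt (Y j) - sqrt (Y (Suc j))) * (2 * sqrt (Y j))"
          unfolding pj using sY1 by (intro mult_left_mono) auto
        then show ?thesis using sY by (simp add: field_simps)
      qed
      have "p j * \<bar>Phi d m j\<bar> ^ 3 \<le> p j * (K * sqrt (y m) / sqrt (Y j))"
        using P3 pos[of j] by (intro mult_left_mono) auto
      also have "\<dots> = K * sqrt (y m) * (p j / sqrt (Y j))" by simp
      also have "\<dots> \<le> K * sqrt (y m) * (2 * (sqrt (Y j) - sqrt (Y (Suc j))))"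
        using \<open>p j / sqrt (Y j) \<le> _\<close> K0 y_pos[of m] by (intro mult_left_mono) auto
      also have "\<dots> = t j - t (Suc j)" unfolding tj by simp
      finally show ?thesis .
    qed
  qed
  also have "t 0 = 2 * K * y m" unfolding t_def using y_pos[of m]
    by (simp add: YSuc)
  also have "2 * K * y m = (432 / sqrt (c ^ Suc d)) * y m" unfolding K_def by simp
  finally show ?thesis .
qed

end


lemma geo_diff:
  fixes a b :: real
  assumes "0 \<le> b" "b \<le> a" "a < 1"
  shows "(\<Sum>k<n. a ^ Suc k - b ^ Suc k) \<le> a / (1 - a) - b / (1 - b)"
proof -
  have g: "(\<Sum>k<n. x ^ Suc k) = x / (1 - x) - x ^ Suc n / (1 - x)" if "x < 1" for x :: real
  proof -
    have "(\<Sum>k<n. x ^ Suc k) = x * (\<Sum>k<n. x ^ k)" by (simp add: sum_distrib_left)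
    also have "\<dots> = x * ((x ^ n - 1) / (x - 1))" using that by (simp add: geometric_sum)
    also have "\<dots> = x * ((1 - x ^ n) / (1 - x))" by (metis minus_diff_eq minus_divide_divide)
    also have "\<dots> = x / (1 - x) - x ^ Suc n / (1 - x)"
      by (simp add: diff_divide_distrib right_diff_distrib)
    finally show ?thesis .
  qed
  have "b ^ Suc n / (1 - b) \<le> a ^ Suc n / (1 - a)"
    by (rule frac_le) (use assms power_mono[of b a "Suc n"] in auto)
  then show ?thesis using g[of a] g[of b] assms by (simp add: sum_subtractf)
qed

lemma pow_diff_le:
  fixes a b :: real
  assumes "0 \<le> b" "b \<le> a" "a \<le> 1"
  shows "a ^ k - b ^ k \<le> real k * (a - b)"
proof (induction k)
  case (Suc k)
  have "a ^ Suc k - b ^ Suc k = a * (a ^ k - b ^ k) + b ^ k * (a - b)" by (simp add: algebra_simps)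
  also have "\<dots> \<le> (a ^ k - b ^ k) + (a - b)"
  proof (rule add_mono)
    have "0 \<le> a ^ k - b ^ k" using assms by (simp add: power_mono)
    then show "a * (a ^ k - b ^ k) \<le> a ^ k - b ^ k" using assms by (simp add: mult_left_le_one_le)
    show "b ^ k * (a - b) \<le> a - b" using assms by (simp add: mult_left_le_one_le power_le_one)
  qed
  also have "\<dots> \<le> real k * (a - b) + (a - b)" using Suc by simp
  finally show ?case by (simp add: algebra_simps)
qed simp

context pd
begin

definition Fm :: "nat \<Rightarrow> real" where "Fm m = 1 - y m"
definition Fb :: "nat \<Rightarrow> real" where "Fb m = 1 - Y m"
definition w :: "nat \<Rightarrow> nat \<Rightarrow> real" where
  "w k m = (if k = 0 then (if m = 0 then 1 else 0) else Fm m ^ k - Fb m ^ k)"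
definition NN :: "nat \<Rightarrow> nat \<Rightarrow> real" where "NN n m = (\<Sum>k<n. w k m)"

lemma Fb_ge0: "0 \<le> Fb m" using Y_le1 by (simp add: Fb_def)
lemma Fb_le: "Fb m \<le> Fm m" using y_le_Y by (simp add: Fb_def Fm_def)
lemma Fm_less1: "Fm m < 1" using y_pos by (simp add: Fm_def)
lemma Fm_Fb: "Fm m - Fb m = p m" using y_eq[of m] by (simp add: Fm_def Fb_def)

lemma w_nonneg: "0 \<le> w k m"
  unfolding w_def using Fb_ge0 Fb_le by (auto intro: power_mono)

lemma NN_mono: "NN n m \<le> NN (Suc n) m" unfolding NN_def using w_nonneg by simp

lemma NN_nonneg: "0 \<le> NN n m" unfolding NN_def by (rule sum_nonneg) (rule w_nonneg)

lemma NN_le1: "NN n m \<le> (if m = 0 then 1 else 0) + rr p m / y m"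
proof -
  have "NN n m \<le> NN (Suc n) m" by (rule NN_mono)
  also have "NN (Suc n) m = (if m = 0 then 1 else 0) + (\<Sum>k<n. Fm m ^ Suc k - Fb m ^ Suc k)"
    unfolding NN_def by (subst sum.lessThan_Suc_shift) (simp add: w_def)
  also have "(\<Sum>k<n. Fm m ^ Suc k - Fb m ^ Suc k) \<le> Fm m / (1 - Fm m) - Fb m / (1 - Fb m)"
    by (rule geo_diff[OF Fb_ge0 Fb_le Fm_less1])
  also have "Fm m / (1 - Fm m) - Fb m / (1 - Fb m) = rr p m / y m"
    using y_pos[of m] Y_pos[of m] y_eq[of m]
    by (simp add: Fm_def Fb_def rr_eq field_simps)
  finally show ?thesis by simp
qed

lemma NN_le2: assumes "m > 0" shows "NN n m \<le> real n ^ 2 * p m"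
proof -
  have "NN n m \<le> (\<Sum>k<n. real n * p m)"
    unfolding NN_def
  proof (rule sum_mono)
    fix k assume k: "k \<in> {..<n}"
    show "w k m \<le> real n * p m"
    proof (cases "k = 0")
      case True then show ?thesis using assms pos[of m] by (simp add: w_def)
    next
      case False
      have "Fm m ^ k - Fb m ^ k \<le> real k * (Fm m - Fb m)"
        by (rule pow_diff_le[OF Fb_ge0 Fb_le]) (use Fm_less1[of m] in simp)
      also have "\<dots> \<le> real n * p m" using k pos[of m] by (simp add: Fm_Fb mult_right_mono)
      finally show ?thesis using False by (simp add: w_def)
    qed
  qed
  also have "\<dots> = real n ^ 2 * p m" by (simp add: power2_eq_square)
  finally show ?thesis .
qed

lemma mm_eq: "mm p t = (LEAST j. y j < 1 / t)" unfolding mm_def y_def by simp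

lemma mm_props:
  assumes n: "n \<ge> (1::nat)"
  shows "y (mm p (real n)) < 1 / real n" "Y (mm p (real n)) \<ge> 1 / real n"
proof -
  have "\<exists>j. y j < 1 / real n"
  proof -
    have "eventually (\<lambda>j. y j < 1 / real n) sequentially"
      using y_lim n by (intro order_tendstoD) auto
    then show ?thesis by (auto dest: eventually_happens)
  qed
  then show y1: "y (mm p (real n)) < 1 / real n" unfolding mm_eq by (rule LeastI_ex)
  show "Y (mm p (real n)) \<ge> 1 / real n"
  proof (cases "mm p (real n)")
    case 0 then show ?thesis using n by (simp add: Y0)
  next
    case (Suc k)
    then have "\<not> y k < 1 / real n" using not_less_Least[of k "\<lambda>j. y j < 1 / real n"]
      unfolding mm_eq by auto
    then show ?thesis using Suc by (simp add: YSuc)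
  qed
qed

lemma main_sum:
  assumes n: "n \<ge> (1::nat)" and C: "C \<ge> 0"
    and H1: "\<And>m. hh d m \<le> ennreal (C * y m)"
    and H2: "\<And>m. ennreal ((if m = 0 then 1 else 0) + rr p m / y m) * hh d m \<le> ennreal (g m)"
    and g0: "\<And>m. g m \<ge> 0"
  shows "(\<Sum>m. ennreal (NN n m) * hh d m) \<le> ennreal ((\<Sum>m\<le>mm p (real n). g m) + C)"
proof -
  define mn where "mn = mm p (real n)"
  define f where "f m = ennreal (NN n m) * hh d m" for m
  have "(\<Sum>m. f m) = (\<Sum>i. f (i + Suc mn)) + (\<Sum>i<Suc mn. f i)"
    by (rule suminf_offset[OF summableI])
  also have "(\<Sum>i<Suc mn. f i) \<le> (\<Sum>i<Suc mn. ennreal (g i))"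
  proof (rule sum_mono)
    fix i
    have "f i \<le> ennreal ((if i = 0 then 1 else 0) + rr p i / y i) * hh d i"
      unfolding f_def by (intro mult_right_mono ennreal_leI NN_le1) auto
    also have "\<dots> \<le> ennreal (g i)" by (rule H2)
    finally show "f i \<le> ennreal (g i)" .
  qed
  also have "(\<Sum>i<Suc mn. ennreal (g i)) = ennreal (\<Sum>m\<le>mn. g m)"
    using g0 by (simp add: lessThan_Suc_atMost)
  also have "(\<Sum>i. f (i + Suc mn)) \<le> (\<Sum>i. ennreal (real n ^ 2 * C * y mn) * ennreal (p (mn + 1 + i)))"
  proof (rule suminf_le[OF _ summableI summableI])
    fix i
    have "f (i + Suc mn) \<le> ennreal (real n ^ 2 * p (i + Suc mn)) * ennreal (C * y (i + Suc mn))"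
      unfolding f_def by (intro mult_mono ennreal_leI NN_le2 H1) auto
    also have "\<dots> = ennreal (real n ^ 2 * p (i + Suc mn) * (C * y (i + Suc mn)))"
      using pos[of "i + Suc mn"] y_pos[of "i + Suc mn"] C by (subst ennreal_mult) auto
    also have "\<dots> \<le> ennreal (real n ^ 2 * C * y mn * p (mn + 1 + i))"
    proof (rule ennreal_leI)
      have "y (i + Suc mn) \<le> y mn" by (rule y_dec) simp
      then have "C * y (i + Suc mn) \<le> C * y mn" using C by (rule mult_left_mono)
      then have "real n ^ 2 * p (i + Suc mn) * (C * y (i + Suc mn)) \<le> real n ^ 2 * p (i + Suc mn) * (C * y mn)"
        using pos[of "i + Suc mn"] by (rule_tac mult_left_mono) auto
      then show "real n ^ 2 * p (i + Suc mn) * (C * y (i + Suc mn)) \<le> real n ^ 2 * C * y mn * p (mn + 1 + i)"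
        by (simp add: algebra_simps)
    qed
    also have "\<dots> = ennreal (real n ^ 2 * C * y mn) * ennreal (p (mn + 1 + i))"
      using pos[of "mn + 1 + i"] y_pos[of mn] C by (subst ennreal_mult) auto
    finally show "f (i + Suc mn) \<le> ennreal (real n ^ 2 * C * y mn) * ennreal (p (mn + 1 + i))" .
  qed
  also have "\<dots> = ennreal (real n ^ 2 * C * y mn) * (\<Sum>i. ennreal (p (mn + 1 + i)))"
    by simp
  also have "(\<Sum>i. ennreal (p (mn + 1 + i))) = ennreal (y mn)"
  proof (rule suminf_ennreal_eq)
    show "\<And>i. 0 \<le> p (mn + 1 + i)" using pos less_imp_le by blast
    show "(\<lambda>i. p (mn + 1 + i)) sums y mn" unfolding y_alt
      using summ_shift[of "mn + 1"] by (simp add: summable_sums)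
  qed
  also have "ennreal (real n ^ 2 * C * y mn) * ennreal (y mn) \<le> ennreal C"
  proof -
    have ym: "y mn < 1 / real n" "0 < y mn" using mm_props[OF n] y_pos unfolding mn_def by auto
    have "real n * y mn \<le> 1" using ym n by (simp add: field_simps)
    then have "(real n * y mn) ^ 2 \<le> 1" using ym by (simp add: power_le_one)
    then have "real n ^ 2 * C * y mn * y mn \<le> C" using C
      by (simp add: power2_eq_square algebra_simps mult_left_le)
    then show ?thesis using ym C by (simp add: ennreal_mult[symmetric] ennreal_leI)
  qed
  finally have "(\<Sum>m. f m) \<le> ennreal C + ennreal (\<Sum>m\<le>mn. g m)" by (simp add: add_mono)
  also have "\<dots> = ennreal ((\<Sum>m\<le>mn. g m) + C)" using g0 C by (simp add: sum_nonneg add.commute)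
  finally show ?thesis unfolding f_def mn_def .
qed

end


context pd
begin

lemma sum_rr_le:
  assumes n: "n \<ge> (1::nat)"
  shows "(\<Sum>m\<le>mm p (real n). rr p m) \<le> ln (real n) + 1"
proof -
  define mn where "mn = mm p (real n)"
  have Yn: "Y mn \<ge> 1 / real n" using mm_props(2)[OF n] unfolding mn_def .
  have "Y mn \<le> Y 0 * exp (-(\<Sum>l\<in>{0..<mn}. rr p l))" by (rule Y_exp) simp
  then have "1 / real n \<le> exp (-(\<Sum>l<mn. rr p l))" using Yn by (simp add: Y0 atLeast0LessThan)
  then have "ln (1 / real n) \<le> -(\<Sum>l<mn. rr p l)" using n
    by (metis divide_pos_pos ln_exp ln_le_cancel_iff exp_gt_zero of_nat_0_less_iff zero_less_one
        less_le_trans le_numeral_extra(4) linorder_not_le not_one_le_zero)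
  then have S: "(\<Sum>l<mn. rr p l) \<le> ln (real n)" using n by (simp add: ln_div)
  have "(\<Sum>m\<le>mn. rr p m) = (\<Sum>l<mn. rr p l) + rr p mn" by (simp add: lessThan_Suc_atMost[symmetric])
  also have "\<dots> \<le> ln (real n) + 1" using S rr_less1[of mn] by simp
  finally show ?thesis unfolding mn_def .
qed

lemma total_a:
  assumes c: "c > 0" and rc: "\<And>l. rr p l \<le> 1 - c" and n: "n \<ge> (1::nat)"
  shows "(\<Sum>m. ennreal (NN n m) * hh d m) \<le> ennreal ((432 / sqrt (c ^ Suc d)) * (3 + ln (real n)))"
proof -
  define C where "C = 432 / sqrt (c ^ Suc d)"
  have C0: "C \<ge> 0" unfolding C_def using c by simp
  have H1: "hh d m \<le> ennreal (C * y m)" for m unfolding C_def by (rule hh_a[OF c rc])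
  have "(\<Sum>m. ennreal (NN n m) * hh d m) \<le> ennreal ((\<Sum>m\<le>mm p (real n). C * ((if m = 0 then 1 else 0) + rr p m)) + C)"
  proof (rule main_sum[OF n C0 H1])
    fix m
    show "0 \<le> C * ((if m = 0 then 1 else 0) + rr p m)" using C0 rr_nonneg[of m] by simp
    have "ennreal ((if m = 0 then 1 else 0) + rr p m / y m) * hh d m
        \<le> ennreal ((if m = 0 then 1 else 0) + rr p m / y m) * ennreal (C * y m)"
      by (rule mult_left_mono[OF H1]) simp
    also have "\<dots> = ennreal (((if m = 0 then 1 else 0) + rr p m / y m) * (C * y m))"
      using rr_nonneg[of m] y_pos[of m] C0 by (subst ennreal_mult) auto
    also have "\<dots> \<le> ennreal (C * ((if m = 0 then 1 else 0) + rr p m))"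
    proof (rule ennreal_leI)
      have "((if m = 0 then 1 else 0) + rr p m / y m) * (C * y m) = C * ((if m = 0 then y m else 0) + rr p m)"
        using y_pos[of m] by (simp add: field_simps)
      also have "\<dots> \<le> C * ((if m = 0 then 1 else 0) + rr p m)"
        using C0 y_le_Y[of m] Y_le1[of m] by (intro mult_left_mono) auto
      finally show "((if m = 0 then 1 else 0) + rr p m / y m) * (C * y m) \<le> C * ((if m = 0 then 1 else 0) + rr p m)" .
    qed
    finally show "ennreal ((if m = 0 then 1 else 0) + rr p m / y m) * hh d m \<le> ennreal (C * ((if m = 0 then 1 else 0) + rr p m))" .
  qed
  also have "(\<Sum>m\<le>mm p (real n). C * ((if m = 0 then 1 else 0) + rr p m)) = C * (1 + (\<Sum>m\<le>mm p (real n). rr p m))"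
    by (simp add: sum_distrib_left[symmetric] sum.distrib)
  also have "C * (1 + (\<Sum>m\<le>mm p (real n). rr p m)) + C \<le> C * (3 + ln (real n))"
  proof -
    have "C * (\<Sum>m\<le>mm p (real n). rr p m) \<le> C * (ln (real n) + 1)"
      by (rule mult_left_mono[OF sum_rr_le[OF n] C0])
    then show ?thesis by (simp add: algebra_simps)
  qed
  finally show ?thesis unfolding C_def by (simp add: ennreal_leI)
qed

lemma sum_EE_le:
  "(\<Sum>m\<le>mn. EE d m) \<le> real d * ((\<Sum>k=1..mn. ee p d k) + real d)"
proof -
  have "(\<Sum>m\<le>mn. EE d m) = (\<Sum>m\<le>mn. \<Sum>t=1..d. ee p d (t + m))"
  proof (rule sum.cong[OF refl])
    fix m
    have e: "{m<..m+d} = {1+m..d+m}" by auto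
    show "EE d m = (\<Sum>t=1..d. ee p d (t + m))" unfolding EE_def e
      by (rule sum.shift_bounds_cl_nat_ivl)
  qed
  also have "\<dots> = (\<Sum>t=1..d. \<Sum>m\<le>mn. ee p d (t + m))" by (rule sum.swap)
  also have "\<dots> \<le> (\<Sum>t=1..d. (\<Sum>k=1..mn. ee p d k) + real d)"
  proof (rule sum_mono)
    fix t assume t: "t \<in> {1..d}"
    have "(\<Sum>m\<le>mn. ee p d (t + m)) = (\<Sum>m=0..mn. ee p d (m + t))" by (simp add: atMost_atLeast0 add.commute)
    also have "\<dots> = (\<Sum>k=0+t..mn+t. ee p d k)" by (rule sum.shift_bounds_cl_nat_ivl[symmetric])
    also have "\<dots> \<le> (\<Sum>k=1..mn+d. ee p d k)"
      by (rule sum_mono2) (use t ee_nonneg in auto)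
    also have "(\<Sum>k=1..mn+d. ee p d k) = (\<Sum>k=1..mn. ee p d k) + (\<Sum>k\<in>{mn<..mn+d}. ee p d k)"
    proof -
      have "{1..mn+d} = {1..mn} \<union> {mn<..mn+d}" by auto
      then show ?thesis by (simp add: sum.union_disjoint ivl_disj_int)
    qed
    also have "(\<Sum>k\<in>{mn<..mn+d}. ee p d k) \<le> of_nat (card {mn<..mn+d}) * 1"
      by (rule sum_bounded_above) (use ee_le1 in auto)
    finally show "(\<Sum>m\<le>mn. ee p d (t + m)) \<le> (\<Sum>k=1..mn. ee p d k) + real d" by simp
  qed
  also have "\<dots> = real d * ((\<Sum>k=1..mn. ee p d k) + real d)" by simp
  finally show ?thesis .
qed

lemma total_b:
  assumes m0: "\<And>l. l \<ge> m0 \<Longrightarrow> 16 * Y (Suc l) \<le> Y l" and d: "d > 0" and n: "n \<ge> (1::nat)"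
  defines "C1 \<equiv> real d ^ 2 + 2 * (2 + real d) ^ 3"
  defines "C2 \<equiv> C1 * real d + ((1 + real m0) ^ 3 + 2 * (2 + real m0) ^ 3)"
  shows "(\<Sum>m. ennreal (NN n m) * hh d m)
     \<le> ennreal (2 * C2 * real m0 + 2 * C1 * real d * ((\<Sum>k=1..mm p (real n). ee p d k) + real d) + C2)"
proof -
  have C10: "C1 \<ge> 0" unfolding C1_def by simp
  have C20: "C2 \<ge> 0" unfolding C2_def using C10 by simp
  have H1: "hh d m \<le> ennreal (C2 * y m)" for m unfolding C2_def C1_def by (rule hh_b_global[OF m0 d])
  define g where "g m = 2 * C2 * (if m < m0 then 1 else 0) + 2 * C1 * EE d m" for m
  have fy: "((if m = 0 then 1 else 0) + rr p m / y m) * y m \<le> 2" for m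
  proof -
    have "((if m = 0 then 1 else 0) + rr p m / y m) * y m = (if m = 0 then y m else 0) + rr p m"
      using y_pos[of m] by (simp add: field_simps)
    also have "\<dots> \<le> 2" using y_le_Y[of m] Y_le1[of m] rr_less1[of m] by auto
    finally show ?thesis .
  qed
  have "(\<Sum>m. ennreal (NN n m) * hh d m) \<le> ennreal ((\<Sum>m\<le>mm p (real n). g m) + C2)"
  proof (rule main_sum[OF n C20 H1])
    fix m
    show "0 \<le> g m" unfolding g_def using C10 C20 EE_nonneg[of d m] by simp
    let ?a = "(if m = 0 then 1 else 0) + rr p m / y m"
    have a0: "?a \<ge> 0" using rr_nonneg[of m] y_pos[of m] by simp
    show "ennreal ?a * hh d m \<le> ennreal (g m)"
    proof (cases "m < m0")
      case True
      have "ennreal ?a * hh d m \<le> ennreal ?a * ennreal (C2 * y m)" by (rule mult_left_mono[OF H1]) simp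
      also have "\<dots> = ennreal (C2 * (?a * y m))" using a0 C20 y_pos[of m] by (subst ennreal_mult[symmetric]) (auto simp: algebra_simps)
      also have "\<dots> \<le> ennreal (g m)"
      proof (rule ennreal_leI)
        have "C2 * (?a * y m) \<le> C2 * 2" by (rule mult_left_mono[OF fy C20])
        moreover have "g m = 2 * C2 + 2 * C1 * EE d m" using True unfolding g_def by simp
        moreover have "0 \<le> 2 * C1 * EE d m" using C10 EE_nonneg[of d m] by simp
        ultimately show "C2 * (?a * y m) \<le> g m" by linarith
      qed
      finally show ?thesis .
    next
      case False
      have "hh d m \<le> ennreal (C1 * y m * EE d m)" using hh_b1[of m0 d m] m0 d False unfolding C1_def by force
      then have "ennreal ?a * hh d m \<le> ennreal ?a * ennreal (C1 * y m * EE d m)" by (rule mult_left_mono) simp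
      also have "\<dots> = ennreal ((C1 * EE d m) * (?a * y m))" using a0 C10 y_pos[of m] EE_nonneg[of d m]
        by (subst ennreal_mult[symmetric]) (auto simp: algebra_simps)
      also have "\<dots> \<le> ennreal (g m)"
      proof (rule ennreal_leI)
        have "(C1 * EE d m) * (?a * y m) \<le> (C1 * EE d m) * 2"
          by (rule mult_left_mono[OF fy]) (use C10 EE_nonneg[of d m] in simp)
        moreover have "g m = 2 * C1 * EE d m" using False unfolding g_def by simp
        ultimately show "(C1 * EE d m) * (?a * y m) \<le> g m" by linarith
      qed
      finally show ?thesis .
    qed
  qed
  also have "(\<Sum>m\<le>mm p (real n). g m) \<le> 2 * C2 * real m0 + 2 * C1 * (real d * ((\<Sum>k=1..mm p (real n). ee p d k) + real d))"
  proof -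
    define mn where "mn = mm p (real n)"
    have "(\<Sum>m\<in>{..mn} \<inter> {..<m0}. 1::real) = (\<Sum>m\<le>mn. if m \<in> {..<m0} then 1 else 0)"
      by (rule sum.inter_restrict) simp
    then have "(\<Sum>m\<le>mn. (if m < m0 then 1 else 0::real)) = (\<Sum>m\<in>{..mn} \<inter> {..<m0}. 1)"
      by simp
    also have "\<dots> = real (card ({..mn} \<inter> {..<m0}))" by simp
    also have "\<dots> \<le> real m0" using card_mono[of "{..<m0}" "{..mn} \<inter> {..<m0}"] by auto
    finally have I: "(\<Sum>m\<le>mn. (if m < m0 then 1 else 0::real)) \<le> real m0" .
    have "(\<Sum>m\<le>mn. g m) = 2 * C2 * (\<Sum>m\<le>mn. (if m < m0 then 1 else 0)) + 2 * C1 * (\<Sum>m\<le>mn. EE d m)"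
      unfolding g_def by (simp add: sum.distrib sum_distrib_left)
    also have "\<dots> \<le> 2 * C2 * real m0 + 2 * C1 * (real d * ((\<Sum>k=1..mn. ee p d k) + real d))"
      using I sum_EE_le[of d mn] C10 C20 by (intro add_mono mult_left_mono) auto
    finally show ?thesis unfolding mn_def .
  qed
  then have "ennreal ((\<Sum>m\<le>mm p (real n). g m) + C2) \<le> ennreal (2 * C2 * real m0 + 2 * C1 * real d * ((\<Sum>k=1..mm p (real n). ee p d k) + real d) + C2)"
    by (intro ennreal_leI) (simp add: algebra_simps)
  finally show ?thesis .
qed

end


locale ps = prob_space M for M :: "'a measure" +
  fixes X :: "nat \<Rightarrow> 'a \<Rightarrow> nat" and p :: "nat \<Rightarrow> real"
  assumes meas: "\<And>i. X i \<in> measurable M (count_space UNIV)"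
    and indep: "indep_vars (\<lambda>_. count_space UNIV) X {1..}"
    and ident: "\<And>i. i \<ge> 1 \<Longrightarrow> distr M (count_space UNIV) (X i) = distr M (count_space UNIV) (X 1)"
    and p_def: "\<And>k. p k = prob {\<omega> \<in> space M. X 1 \<omega> = k}"
    and p_pos: "\<And>k. p k > 0"
begin

lemma ev_X: "{\<omega> \<in> space M. X i \<omega> \<in> A} \<in> events"
proof -
  have "X i -` A \<inter> space M \<in> events" using meas[of i] by (rule measurable_sets) simp
  moreover have "X i -` A \<inter> space M = {\<omega> \<in> space M. X i \<omega> \<in> A}" by auto
  ultimately show ?thesis by simp
qed

lemma prob_X_ident: "i \<ge> 1 \<Longrightarrow> prob {\<omega> \<in> space M. X i \<omega> \<in> A} = prob {\<omega> \<in> space M. X 1 \<omega> \<in> A}"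
proof -
  assume i: "i \<ge> 1"
  have "prob {\<omega> \<in> space M. X i \<omega> \<in> A} = measure (distr M (count_space UNIV) (X i)) A"
    using measure_distr[OF meas[of i], of A] by (simp add: vimage_def Int_def conj_commute)
  also have "\<dots> = measure (distr M (count_space UNIV) (X 1)) A" using ident[OF i] by simp
  also have "\<dots> = prob {\<omega> \<in> space M. X 1 \<omega> \<in> A}"
    using measure_distr[OF meas[of 1], of A] by (simp add: vimage_def Int_def conj_commute)
  finally show ?thesis .
qed

lemma p_sums: "p sums 1"
proof -
  define A where "A i = {\<omega> \<in> space M. X 1 \<omega> = i}" for i
  have "(\<lambda>i. prob (A i)) sums prob (\<Union>i. A i)"
  proof (rule finite_measure_UNION)
    show "range A \<subseteq> events" unfolding A_def using ev_X[of 1 "{_}"] by auto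
    show "disjoint_family A" unfolding A_def disjoint_family_on_def by auto
  qed
  moreover have "(\<Union>i. A i) = space M" unfolding A_def by auto
  ultimately show ?thesis unfolding A_def p_def by (simp add: prob_space)
qed

sublocale pd p
  by unfold_locales (use p_pos p_sums in auto)

lemma prob_X1_le: "prob {\<omega> \<in> space M. X 1 \<omega> \<le> m} = Fm m"
proof -
  have "{\<omega> \<in> space M. X 1 \<omega> \<le> m} = (\<Union>i\<in>{..<Suc m}. {\<omega> \<in> space M. X 1 \<omega> = i})" by auto
  then have "prob {\<omega> \<in> space M. X 1 \<omega> \<le> m} = (\<Sum>i\<in>{..<Suc m}. prob {\<omega> \<in> space M. X 1 \<omega> = i})"
    using measure_finite_Union[of "{..<Suc m}" "\<lambda>i. {\<omega> \<in> space M. X 1 \<omega> = i}" M]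
      ev_X[of 1 "{_}"] by (auto simp: disjoint_family_on_def)
  then show ?thesis unfolding Fm_def y_alt2 by (simp add: p_def)
qed

end

context ps begin
lemma maxX_le_iff: "maxX X k \<omega> \<le> m \<longleftrightarrow> (\<forall>i\<in>{1..k}. X i \<omega> \<le> m)"
  unfolding maxX_def by (subst Max_le_iff) auto

lemma maxX_0: "maxX X 0 \<omega> = 0" unfolding maxX_def by simp

lemma maxX_Suc: "maxX X (Suc k) \<omega> = max (maxX X k \<omega>) (X (Suc k) \<omega>)"
proof -
  have "insert 0 ((\<lambda>i. X i \<omega>) ` {1..Suc k}) = insert (X (Suc k) \<omega>) (insert 0 ((\<lambda>i. X i \<omega>) ` {1..k}))"
    by (auto simp: atLeastAtMostSuc_conv)
  then show ?thesis unfolding maxX_def by (simp add: max.commute)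
qed

lemma key_prob: "prob {\<omega> \<in> space M. maxX X k \<omega> \<le> m \<and> X (Suc k) \<omega> = j} = Fm m ^ k * p j"
proof -
  define A where "A i = (if i = Suc k then X i -` {j} \<inter> space M else X i -` {..m} \<inter> space M)" for i
  have ind: "indep_sets (\<lambda>i. {X i -` A \<inter> space M | A. A \<in> sets (count_space UNIV)}) {1..}"
    using indep unfolding indep_vars_def2 by simp
  have "prob (\<Inter>i\<in>{1..Suc k}. A i) = (\<Prod>i\<in>{1..Suc k}. prob (A i))"
    by (rule indep_setsD[OF ind]) (auto simp: A_def)
  moreover have "(\<Inter>i\<in>{1..Suc k}. A i) = {\<omega> \<in> space M. maxX X k \<omega> \<le> m \<and> X (Suc k) \<omega> = j}"
  proof -
    have e1: "{1..Suc k} = insert (Suc k) {1..k}" by auto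
    have e2: "(\<Inter>i\<in>{1..k}. A i) = (\<Inter>i\<in>{1..k}. X i -` {..m} \<inter> space M)"
      by (rule INF_cong[OF refl]) (auto simp: A_def)
    have "(\<Inter>i\<in>{1..Suc k}. A i) = (X (Suc k) -` {j} \<inter> space M) \<inter> (\<Inter>i\<in>{1..k}. X i -` {..m} \<inter> space M)"
      unfolding e1 by (simp only: INT_insert e2) (simp add: A_def)
    also have "\<dots> = {\<omega> \<in> space M. maxX X k \<omega> \<le> m \<and> X (Suc k) \<omega> = j}"
      unfolding maxX_le_iff by blast
    finally show ?thesis .
  qed
  moreover have "(\<Prod>i\<in>{1..Suc k}. prob (A i)) = (\<Prod>i\<in>{1..k}. prob (A i)) * prob (A (Suc k))"
    by (simp add: atLeastAtMostSuc_conv mult.commute)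
  moreover have "(\<Prod>i\<in>{1..k}. prob (A i)) = Fm m ^ k"
  proof -
    have "(\<Prod>i\<in>{1..k}. prob (A i)) = (\<Prod>i\<in>{1..k}. Fm m)"
    proof (rule prod.cong[OF refl])
      fix i assume i: "i \<in> {1..k}"
      have "A i = {\<omega> \<in> space M. X i \<omega> \<in> {..m}}" using i unfolding A_def by auto
      then have "prob (A i) = prob {\<omega> \<in> space M. X 1 \<omega> \<in> {..m}}" using prob_X_ident[of i "{..m}"] i by simp
      then show "prob (A i) = Fm m" using prob_X1_le[of m] by simp
    qed
    then show ?thesis by simp
  qed
  moreover have "prob (A (Suc k)) = p j"
  proof -
    have "A (Suc k) = {\<omega> \<in> space M. X (Suc k) \<omega> \<in> {j}}" unfolding A_def by auto
    then show ?thesis using prob_X_ident[of "Suc k" "{j}"] by (simp add: p_def)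
  qed
  ultimately show ?thesis by simp
qed

end

context ps begin
lemma maxX_meas: "maxX X k \<in> measurable M (count_space UNIV)"
proof (induction k)
  case 0 then show ?case by (simp add: maxX_0 measurable_count_space_const)
next
  case (Suc k)
  have "(\<lambda>\<omega>. (\<lambda>a \<omega>. max a (X (Suc k) \<omega>)) (maxX X k \<omega>) \<omega>) \<in> measurable M (count_space UNIV)"
  proof (rule measurable_compose_countable[OF _ Suc.IH])
    fix a :: nat
    show "(\<lambda>\<omega>. max a (X (Suc k) \<omega>)) \<in> measurable M (count_space UNIV)"
      using measurable_compose[OF meas[of "Suc k"], of "\<lambda>j. max a j" "count_space UNIV"] by simp
  qed
  then show ?case by (simp add: maxX_Suc[abs_def])
qed

lemma fun2_meas:
  assumes f: "f \<in> measurable M (count_space UNIV)" and g: "g \<in> measurable M (count_space UNIV)"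
    and that: "\<And>a b. h a b \<in> space N"
  shows "(\<lambda>\<omega>. h (f \<omega> :: nat) (g \<omega> :: nat)) \<in> measurable M N"
proof -
  have "(\<lambda>\<omega>. (\<lambda>a \<omega>. h a (g \<omega>)) (f \<omega>) \<omega>) \<in> measurable M N"
  proof (rule measurable_compose_countable[OF _ f])
    fix a :: nat
    show "(\<lambda>\<omega>. h a (g \<omega>)) \<in> measurable M N"
      by (rule measurable_compose[OF g]) (simp add: that)
  qed
  then show ?thesis by simp
qed

lemma xi_eq: "xi p X d (Suc k) \<omega> = Phi d (maxX X k \<omega>) (X (Suc k) \<omega>)"
  unfolding xi_def indI_def Phi_def maxX_Suc by simp

lemma E_ev: "{\<omega> \<in> space M. maxX X k \<omega> = a \<and> X (Suc k) \<omega> = b} \<in> events"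
proof -
  have "(\<lambda>\<omega>. maxX X k \<omega> = a \<and> X (Suc k) \<omega> = b) \<in> measurable M (count_space UNIV)"
    by (rule fun2_meas[OF maxX_meas meas]) simp
  then have "(\<lambda>\<omega>. maxX X k \<omega> = a \<and> X (Suc k) \<omega> = b) -` {True} \<inter> space M \<in> events"
    by (rule measurable_sets) simp
  moreover have "(\<lambda>\<omega>. maxX X k \<omega> = a \<and> X (Suc k) \<omega> = b) -` {True} \<inter> space M
      = {\<omega> \<in> space M. maxX X k \<omega> = a \<and> X (Suc k) \<omega> = b}" by auto
  ultimately show ?thesis by simp
qed

lemma xi_meas: "(\<lambda>\<omega>. \<bar>xi p X d (Suc k) \<omega>\<bar> ^ 3) \<in> borel_measurable M"
  unfolding xi_eq by (rule fun2_meas[OF maxX_meas meas]) simp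

lemma key_prob_eq: "prob {\<omega> \<in> space M. maxX X k \<omega> = m \<and> X (Suc k) \<omega> = j} = w k m * p j"
proof (cases "k = 0")
  case True
  have "{\<omega> \<in> space M. maxX X k \<omega> = m \<and> X (Suc k) \<omega> = j} = (if m = 0 then {\<omega> \<in> space M. X 1 \<omega> = j} else {})"
    using True by (auto simp: maxX_0)
  then show ?thesis using True by (simp add: w_def p_def)
next
  case False
  show ?thesis
  proof (cases m)
    case 0
    have e: "{\<omega> \<in> space M. maxX X k \<omega> = m \<and> X (Suc k) \<omega> = j} = {\<omega> \<in> space M. maxX X k \<omega> \<le> 0 \<and> X (Suc k) \<omega> = j}"
      using 0 by auto
    have "Fb 0 = 0" by (simp add: Fb_def Y0)
    then have "w k m = Fm 0 ^ k" using 0 False by (simp add: w_def)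
    then show ?thesis unfolding e using key_prob[of k 0 j] 0 by simp
  next
    case (Suc m')
    define B where "B a = {\<omega> \<in> space M. maxX X k \<omega> \<le> a \<and> X (Suc k) \<omega> = j}" for a
    have Bev: "B a \<in> events" for a
    proof -
      have "(\<lambda>\<omega>. maxX X k \<omega> \<le> a \<and> X (Suc k) \<omega> = j) \<in> measurable M (count_space UNIV)"
        by (rule fun2_meas[OF maxX_meas meas]) simp
      then have "(\<lambda>\<omega>. maxX X k \<omega> \<le> a \<and> X (Suc k) \<omega> = j) -` {True} \<inter> space M \<in> events"
        by (rule measurable_sets) simp
      moreover have "(\<lambda>\<omega>. maxX X k \<omega> \<le> a \<and> X (Suc k) \<omega> = j) -` {True} \<inter> space M = B a"
        unfolding B_def by auto
      ultimately show ?thesis by simp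
    qed
    have e: "{\<omega> \<in> space M. maxX X k \<omega> = m \<and> X (Suc k) \<omega> = j} = B m - B m'"
      unfolding B_def using Suc by auto
    have sub: "B m' \<subseteq> B m" unfolding B_def using Suc by auto
    have "prob {\<omega> \<in> space M. maxX X k \<omega> = m \<and> X (Suc k) \<omega> = j} = prob (B m) - prob (B m')"
      unfolding e by (rule finite_measure_Diff[OF Bev Bev sub])
    also have "\<dots> = Fm m ^ k * p j - Fm m' ^ k * p j" unfolding B_def by (simp only: key_prob)
    finally have P: "prob {\<omega> \<in> space M. maxX X k \<omega> = m \<and> X (Suc k) \<omega> = j} = Fm m ^ k * p j - Fm m' ^ k * p j" .
    have "Fb m = Fm m'" using Suc by (simp add: Fb_def Fm_def YSuc)
    then have "w k m = Fm m ^ k - Fm m' ^ k" using False by (simp add: w_def)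
    then have "Fm m ^ k * p j - Fm m' ^ k * p j = w k m * p j" by (simp add: left_diff_distrib)
    then show ?thesis using P by simp
  qed
qed

end

context ps begin
lemma nn_xi: "(\<integral>\<^sup>+\<omega>. ennreal (\<bar>xi p X d (Suc k) \<omega>\<bar> ^ 3) \<partial>M) = (\<Sum>m. ennreal (w k m) * hh d m)"
proof -
  define G where "G m j = \<bar>Phi d m j\<bar> ^ 3" for m j
  define E where "E m j = {\<omega> \<in> space M. maxX X k \<omega> = m \<and> X (Suc k) \<omega> = j}" for m j
  have Eev: "E m j \<in> events" for m j unfolding E_def by (rule E_ev)
  have pt: "ennreal (\<bar>xi p X d (Suc k) \<omega>\<bar> ^ 3) = (\<Sum>m. \<Sum>j. ennreal (G m j) * indicator (E m j) \<omega>)"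
    if \<omega>: "\<omega> \<in> space M" for \<omega>
  proof -
    have inner: "(\<Sum>j. ennreal (G m j) * indicator (E m j) \<omega>)
        = (if maxX X k \<omega> = m then ennreal (G m (X (Suc k) \<omega>)) else 0)" for m
    proof -
      have "(\<Sum>j. ennreal (G m j) * indicator (E m j) \<omega>) = (\<Sum>j\<in>{X (Suc k) \<omega>}. ennreal (G m j) * indicator (E m j) \<omega>)"
        by (rule suminf_finite) (simp_all add: E_def indicator_def)
      then show ?thesis using \<omega> by (simp add: E_def indicator_def)
    qed
    have "(\<Sum>m. \<Sum>j. ennreal (G m j) * indicator (E m j) \<omega>)
        = (\<Sum>m. if maxX X k \<omega> = m then ennreal (G m (X (Suc k) \<omega>)) else 0)"
      by (simp only: inner)
    also have "\<dots> = (\<Sum>m\<in>{maxX X k \<omega>}. if maxX X k \<omega> = m then ennreal (G m (X (Suc k) \<omega>)) else 0)"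
      by (rule suminf_finite) simp_all
    also have "\<dots> = ennreal (G (maxX X k \<omega>) (X (Suc k) \<omega>))" by simp
    finally show ?thesis by (simp add: G_def xi_eq)
  qed
  have "(\<integral>\<^sup>+\<omega>. ennreal (\<bar>xi p X d (Suc k) \<omega>\<bar> ^ 3) \<partial>M) = (\<integral>\<^sup>+\<omega>. (\<Sum>m. \<Sum>j. ennreal (G m j) * indicator (E m j) \<omega>) \<partial>M)"
    by (rule nn_integral_cong) (simp add: pt)
  also have "\<dots> = (\<Sum>m. \<integral>\<^sup>+\<omega>. (\<Sum>j. ennreal (G m j) * indicator (E m j) \<omega>) \<partial>M)"
    by (rule nn_integral_suminf) (use Eev in measurable)
  also have "\<dots> = (\<Sum>m. \<Sum>j. \<integral>\<^sup>+\<omega>. ennreal (G m j) * indicator (E m j) \<omega> \<partial>M)"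
    by (rule suminf_cong, rule nn_integral_suminf) (use Eev in measurable)
  also have "\<dots> = (\<Sum>m. \<Sum>j. ennreal (G m j) * ennreal (w k m * p j))"
  proof (rule suminf_cong, rule suminf_cong)
    fix m j
    have "emeasure M (E m j) = ennreal (w k m * p j)"
      using emeasure_eq_measure[of "E m j"] key_prob_eq[of k m j] unfolding E_def by simp
    then show "(\<integral>\<^sup>+\<omega>. ennreal (G m j) * indicator (E m j) \<omega> \<partial>M) = ennreal (G m j) * ennreal (w k m * p j)"
      using nn_integral_cmult_indicator[OF Eev, of "ennreal (G m j)" m j] by simp
  qed
  also have "\<dots> = (\<Sum>m. ennreal (w k m) * hh d m)"
  proof (rule suminf_cong)
    fix m
    have "(\<Sum>j. ennreal (G m j) * ennreal (w k m * p j)) = (\<Sum>j. ennreal (w k m) * ennreal (p j * G m j))"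
    proof (rule suminf_cong)
      fix j
      have "ennreal (G m j) * ennreal (w k m * p j) = ennreal (G m j * (w k m * p j))"
        using w_nonneg[of k m] pos[of j] by (subst ennreal_mult) (auto simp: G_def)
      also have "\<dots> = ennreal (w k m * (p j * G m j))" by (simp add: algebra_simps)
      also have "\<dots> = ennreal (w k m) * ennreal (p j * G m j)"
        using w_nonneg[of k m] pos[of j] by (subst ennreal_mult) (auto simp: G_def)
      finally show "ennreal (G m j) * ennreal (w k m * p j) = ennreal (w k m) * ennreal (p j * G m j)" .
    qed
    also have "\<dots> = ennreal (w k m) * hh d m" unfolding hh_def G_def by simp
    finally show "(\<Sum>j. ennreal (G m j) * ennreal (w k m * p j)) = ennreal (w k m) * hh d m" .
  qed
  finally show ?thesis .
qed

lemma sum_nn_xi: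
  "(\<Sum>k<n. \<integral>\<^sup>+\<omega>. ennreal (\<bar>xi p X d (Suc k) \<omega>\<bar> ^ 3) \<partial>M) = (\<Sum>m. ennreal (NN n m) * hh d m)"
proof -
  have "(\<Sum>k<n. \<integral>\<^sup>+\<omega>. ennreal (\<bar>xi p X d (Suc k) \<omega>\<bar> ^ 3) \<partial>M) = (\<Sum>k<n. \<Sum>m. ennreal (w k m) * hh d m)"
    by (simp add: nn_xi)
  also have "\<dots> = (\<Sum>m. \<Sum>k<n. ennreal (w k m) * hh d m)"
    by (rule suminf_sum[symmetric]) (rule summableI)
  also have "\<dots> = (\<Sum>m. ennreal (NN n m) * hh d m)"
  proof (rule suminf_cong)
    fix m
    have "(\<Sum>k<n. ennreal (w k m) * hh d m) = (\<Sum>k<n. ennreal (w k m)) * hh d m"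
      by (simp add: sum_distrib_right)
    also have "(\<Sum>k<n. ennreal (w k m)) = ennreal (NN n m)"
      unfolding NN_def using w_nonneg by simp
    finally show "(\<Sum>k<n. ennreal (w k m) * hh d m) = ennreal (NN n m) * hh d m" .
  qed
  finally show ?thesis .
qed
end


lemma sum_1n_shift: "sum g {1..n} = (\<Sum>k<n. g (Suc k))"
  by (induction n) (auto simp: atLeastAtMostSuc_conv add.commute)

context ps begin

lemma filt_sub: "subalgebra M (filt M X k)"
proof -
  define G where "G = {X i -` A \<inter> space M | i A. i \<in> {1..k}}"
  have GP: "G \<subseteq> Pow (space M)" unfolding G_def by auto
  have GS: "G \<subseteq> sets M" unfolding G_def using meas by (auto intro: measurable_sets)
  have "space (filt M X k) = space M" unfolding filt_def by (simp add: space_measure_of_conv)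
  moreover have "sets (filt M X k) \<subseteq> sets M"
    unfolding filt_def G_def[symmetric] using GP GS by (simp add: sets.sigma_sets_subset)
  ultimately show ?thesis unfolding subalgebra_def by simp
qed

lemma sfs: "sigma_finite_subalgebra M (filt M X k)"
proof (rule finite_measure_subalgebra_is_sigma_finite)
  show "finite_measure_subalgebra M (filt M X k)"
    unfolding finite_measure_subalgebra_def finite_measure_subalgebra_axioms_def
    using filt_sub finite_measure_axioms by simp
qed

lemma markov:
  fixes bb :: "nat \<Rightarrow> real" and B e :: real
  assumes n1: "n \<ge> 1" and b: "bb n > 0" and e: "e > 0" and B0: "B \<ge> 0"
    and Bn: "(\<Sum>m. ennreal (NN n m) * hh d m) \<le> ennreal B"
  shows "measure M {\<omega> \<in> space M. \<bar>Ssum M p X d bb n \<omega>\<bar> > e} \<le> B / (bb n ^ 3 * e)"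
proof -
  define f where "f k \<omega> = \<bar>xi p X d k \<omega>\<bar> ^ 3" for k \<omega>
  define I where "I k = (\<integral>\<^sup>+\<omega>. ennreal (f (Suc k) \<omega>) \<partial>M)" for k
  have sumI: "(\<Sum>k<n. I k) \<le> ennreal B" using sum_nn_xi[of d n] Bn unfolding I_def f_def by simp
  have Ik: "I k \<le> ennreal B" if "k < n" for k
  proof -
    have "I k \<le> (\<Sum>k<n. I k)" by (rule member_le_sum) (use that in auto)
    then show ?thesis using sumI by simp
  qed
  have Itop: "I k < top" if "k < n" for k using Ik[OF that] by (simp add: top.not_eq_extremum le_less_trans)
  have fm: "f (Suc k) \<in> borel_measurable M" for k unfolding f_def by (rule xi_meas)
  have fint: "integrable M (f (Suc k))" if "k < n" for k
  proof (rule integrableI_bounded[OF fm])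
    have "(\<integral>\<^sup>+x. ennreal (norm (f (Suc k) x)) \<partial>M) = I k" unfolding I_def f_def by simp
    then show "(\<integral>\<^sup>+x. ennreal (norm (f (Suc k) x)) \<partial>M) < \<infinity>" using Itop[OF that] by simp
  qed
  have fval: "integral\<^sup>L M (f (Suc k)) = enn2real (I k)" for k
    unfolding I_def by (rule integral_eq_nn_integral[OF fm]) (simp add: f_def)
  define CE where "CE k = real_cond_exp M (filt M X (k - 1)) (f k)" for k
  have CEint: "integrable M (CE (Suc k))" and CEval: "integral\<^sup>L M (CE (Suc k)) = integral\<^sup>L M (f (Suc k))"
    if "k < n" for k
    unfolding CE_def using sigma_finite_subalgebra.real_cond_exp_int[OF sfs fint[OF that]] by auto
  have CEpos: "AE \<omega> in M. CE (Suc k) \<omega> \<ge> 0" for k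
    unfolding CE_def
  proof (rule sigma_finite_subalgebra.real_cond_exp_pos[OF sfs])
    show "AE x in M. 0 \<le> f (Suc k) x" by (simp add: f_def)
    show "f (Suc k) \<in> borel_measurable M" by (rule fm)
  qed
  define S where "S \<omega> = 1 / bb n ^ 3 * (\<Sum>k<n. CE (Suc k) \<omega>)" for \<omega>
  have SS: "Ssum M p X d bb n \<omega> = S \<omega>" for \<omega>
    unfolding Ssum_def S_def CE_def f_def by (subst sum_1n_shift) (rule refl)
  have Sint: "integrable M S" unfolding S_def using CEint by (intro integrable_mult_right integrable_sum) auto
  have Sval: "integral\<^sup>L M S = 1 / bb n ^ 3 * (\<Sum>k<n. enn2real (I k))"
  proof -
    have "integral\<^sup>L M S = 1 / bb n ^ 3 * (\<Sum>k<n. integral\<^sup>L M (CE (Suc k)))"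
      unfolding S_def using CEint by (simp add: integral_sum)
    also have "\<dots> = 1 / bb n ^ 3 * (\<Sum>k<n. enn2real (I k))" using CEval fval by simp
    finally show ?thesis .
  qed
  have sumle: "(\<Sum>k<n. enn2real (I k)) \<le> B"
  proof -
    have "(\<Sum>k<n. enn2real (I k)) = enn2real (\<Sum>k<n. I k)" using enn2real_sum[of "{..<n}" I] Itop by (simp add: o_def)
    also have "\<dots> \<le> enn2real (ennreal B)" by (rule enn2real_mono[OF sumI]) simp
    also have "\<dots> = B" using B0 by simp
    finally show ?thesis .
  qed
  have Spos: "AE \<omega> in M. S \<omega> \<ge> 0"
  proof -
    have "AE \<omega> in M. \<forall>k\<in>{..<n}. CE (Suc k) \<omega> \<ge> 0" by (rule AE_finite_allI) (use CEpos in auto)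
    then show ?thesis unfolding S_def
      by (rule eventually_mono) (use b in \<open>auto intro!: divide_nonneg_pos sum_nonneg\<close>)
  qed
  have Sm: "S \<in> borel_measurable M" using Sint by (rule borel_measurable_integrable)
  have "measure M {\<omega> \<in> space M. \<bar>Ssum M p X d bb n \<omega>\<bar> > e} \<le> measure M {\<omega> \<in> space M. \<bar>S \<omega>\<bar> \<ge> e}"
    unfolding SS by (rule finite_measure_mono) (use Sm in auto)
  also have "\<dots> \<le> (\<integral>\<omega>. \<bar>S \<omega>\<bar> \<partial>M) / e"
    by (rule integral_Markov_inequality_measure[of _ _ "space M"]) (use Sint e in auto)
  also have "(\<integral>\<omega>. \<bar>S \<omega>\<bar> \<partial>M) = integral\<^sup>L M S"
    by (rule integral_cong_AE) (use Sm Spos in auto)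
  also have "integral\<^sup>L M S / e \<le> (1 / bb n ^ 3 * B) / e"
    unfolding Sval using sumle b e by (intro divide_right_mono mult_left_mono) auto
  also have "(1 / bb n ^ 3 * B) / e = B / (bb n ^ 3 * e)" by simp
  finally show ?thesis .
qed

lemma conv_generic:
  fixes \<beta> :: "nat \<Rightarrow> real"
  assumes beta: "filterlim \<beta> at_top sequentially"
    and bnd: "\<And>n. n \<ge> 1 \<Longrightarrow> (\<Sum>m. ennreal (NN n m) * hh d m) \<le> ennreal (A + Bc * \<beta> n)"
    and A0: "A \<ge> 0" and B0: "Bc \<ge> 0"
  shows "conv_in_prob M (Ssum M p X d (\<lambda>n. sqrt (\<beta> n)))"
  unfolding conv_in_prob_def
proof (intro allI impI)
  fix e :: real assume e: "e > 0"
  have ev: "eventually (\<lambda>n. n \<ge> 1 \<and> \<beta> n \<ge> 1) sequentially"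
    using eventually_ge_at_top[of 1] filterlim_at_top[THEN iffD1, OF beta, rule_format, of 1]
    by eventually_elim auto
  have up: "eventually (\<lambda>n. measure M {\<omega> \<in> space M. \<bar>Ssum M p X d (\<lambda>n. sqrt (\<beta> n)) n \<omega>\<bar> > e}
      \<le> (A + Bc) / e * inverse (sqrt (\<beta> n))) sequentially"
    using ev
  proof eventually_elim
    case (elim n)
    then have n1: "n \<ge> 1" and b1: "\<beta> n \<ge> 1" by auto
    have sp: "sqrt (\<beta> n) > 0" using b1 by simp
    have "measure M {\<omega> \<in> space M. \<bar>Ssum M p X d (\<lambda>n. sqrt (\<beta> n)) n \<omega>\<bar> > e}
        \<le> (A + Bc * \<beta> n) / (sqrt (\<beta> n) ^ 3 * e)"
      by (rule markov[OF n1 _ e _ bnd[OF n1]]) (use sp A0 B0 b1 in auto)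
    also have "\<dots> \<le> (A + Bc) / e * inverse (sqrt (\<beta> n))"
    proof -
      have "sqrt (\<beta> n) ^ 3 = sqrt (\<beta> n) ^ 2 * sqrt (\<beta> n)" by (simp add: power3_eq_cube power2_eq_square)
      also have "sqrt (\<beta> n) ^ 2 = \<beta> n" using b1 by simp
      finally have s3: "sqrt (\<beta> n) ^ 3 = \<beta> n * sqrt (\<beta> n)" .
      have "A + Bc * \<beta> n \<le> (A + Bc) * \<beta> n" using A0 b1 by (simp add: algebra_simps mult_le_cancel_left1)
      then have "(A + Bc * \<beta> n) / (\<beta> n * sqrt (\<beta> n) * e) \<le> ((A + Bc) * \<beta> n) / (\<beta> n * sqrt (\<beta> n) * e)"
        using sp e b1 by (intro divide_right_mono) auto
      also have "\<dots> = (A + Bc) / e * inverse (sqrt (\<beta> n))" using b1 sp e by (simp add: field_simps)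
      finally show ?thesis unfolding s3 by (simp add: mult.assoc)
    qed
    finally show ?case .
  qed
  have lim: "(\<lambda>n. (A + Bc) / e * inverse (sqrt (\<beta> n))) \<longlonglongrightarrow> 0"
  proof -
    have "(\<lambda>n. inverse (sqrt (\<beta> n))) \<longlonglongrightarrow> 0"
      by (rule tendsto_inverse_0_at_top[OF filterlim_compose[OF sqrt_at_top beta]])
    then show ?thesis using tendsto_mult[OF tendsto_const[of "(A + Bc) / e"]] by fastforce
  qed
  show "(\<lambda>n. measure M {\<omega> \<in> space M. \<bar>Ssum M p X d (\<lambda>n. sqrt (\<beta> n)) n \<omega>\<bar> > e}) \<longlonglongrightarrow> 0"
    by (rule tendsto_sandwich[OF _ up tendsto_const lim]) simp
qed

end


context pd begin

lemma exists_c: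
  assumes lim: "(\<lambda>k. rr p k) \<longlonglongrightarrow> r" and r: "r < 1"
  shows "\<exists>c>0. \<forall>l. rr p l \<le> 1 - c"
proof -
  have "eventually (\<lambda>l. rr p l < (1 + r) / 2) sequentially"
    using lim r by (intro order_tendstoD) auto
  then obtain N where N: "\<And>l. l \<ge> N \<Longrightarrow> rr p l < (1 + r) / 2" by (auto simp: eventually_sequentially)
  define c where "c = Min (insert ((1 - r) / 2) ((\<lambda>l. 1 - rr p l) ` {..<N}))"
  have c0: "c > 0" unfolding c_def using r rr_less1 by (subst Min_gr_iff) auto
  have "rr p l \<le> 1 - c" for l
  proof (cases "l < N")
    case True
    then have "c \<le> 1 - rr p l" unfolding c_def by (intro Min_le) auto
    then show ?thesis by simp
  next
    case False
    have "c \<le> (1 - r) / 2" unfolding c_def by (intro Min_le) auto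
    then show ?thesis using N[of l] False by simp
  qed
  then show ?thesis using c0 by blast
qed

lemma exists_m0:
  assumes lim: "(\<lambda>k. rr p k) \<longlonglongrightarrow> 1"
  shows "\<exists>m0. \<forall>l\<ge>m0. 16 * Y (Suc l) \<le> Y l"
proof -
  have "eventually (\<lambda>l. rr p l > 15 / 16) sequentially"
    using lim by (intro order_tendstoD) auto
  then obtain N where N: "\<And>l. l \<ge> N \<Longrightarrow> rr p l > 15 / 16" by (auto simp: eventually_sequentially)
  have "16 * Y (Suc l) \<le> Y l" if "l \<ge> N" for l
  proof -
    have "Y (Suc l) = Y l * (1 - rr p l)" by (rule Y_Suc_mult)
    also have "\<dots> \<le> Y l * (1 / 16)" using N[OF that] Y_pos[of l] by (intro mult_left_mono) auto
    finally show ?thesis by simp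
  qed
  then show ?thesis by blast
qed

lemma mm_at_top: "filterlim (\<lambda>n. mm p (real n)) at_top sequentially"
  unfolding filterlim_at_top
proof
  fix J :: nat
  define N where "N = nat \<lceil>1 / y J\<rceil> + 1"
  have "mm p (real n) \<ge> J" if n: "n \<ge> N" for n
  proof (rule ccontr)
    assume "\<not> J \<le> mm p (real n)"
    then have "y J \<le> y (mm p (real n))" by (intro y_dec) simp
    moreover have n1: "n \<ge> 1" using n unfolding N_def by simp
    moreover have "y (mm p (real n)) < 1 / real n" by (rule mm_props(1)[OF n1])
    moreover have "1 / real n < y J"
    proof -
      have "1 / y J < real n" using n unfolding N_def by linarith
      then show ?thesis using y_pos[of J] n1 by (simp add: field_simps)
    qed
    ultimately show False by simp
  qed
  then show "eventually (\<lambda>n. J \<le> mm p (real n)) sequentially" by (auto simp: eventually_sequentially)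
qed

lemma partial_at_top:
  assumes ns: "\<not> summable (\<lambda>k. ee p d (Suc k))"
  shows "filterlim (\<lambda>K. \<Sum>k=1..K. ee p d k) at_top sequentially"
  unfolding filterlim_at_top
proof
  fix Z :: real
  define S where "S K = (\<Sum>k=1..K. ee p d k)" for K
  have mono: "K \<le> K' \<Longrightarrow> S K \<le> S K'" for K K'
    unfolding S_def by (rule sum_mono2) (use ee_nonneg in auto)
  show "eventually (\<lambda>K. Z \<le> (\<Sum>k=1..K. ee p d k)) sequentially"
  proof (rule ccontr)
    assume ne: "\<not> eventually (\<lambda>K. Z \<le> (\<Sum>k=1..K. ee p d k)) sequentially"
    have lt: "S K < Z" for K
    proof (rule ccontr)
      assume "\<not> S K < Z"
      then have "\<forall>K'\<ge>K. Z \<le> S K'" using mono by force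
      then have "eventually (\<lambda>K. Z \<le> (\<Sum>k=1..K. ee p d k)) sequentially"
        unfolding S_def eventually_sequentially by blast
      then show False using ne by simp
    qed
    have "summable (\<lambda>k. ee p d (Suc k))"
    proof (rule summableI_nonneg_bounded)
      show "0 \<le> ee p d (Suc k)" for k by (rule ee_nonneg)
      show "(\<Sum>k<n. ee p d (Suc k)) \<le> Z" for n using lt[of n] unfolding S_def sum_1n_shift by simp
    qed
    then show False using ns by simp
  qed
qed

end

theorem proposition4p2:
  fixes M :: "'a measure" and X :: "nat \<Rightarrow> 'a \<Rightarrow> nat" and p :: "nat \<Rightarrow> real"
    and \<delta> :: nat and r :: real
  assumes "prob_space M"
    and meas: "\<And>i. X i \<in> measurable M (count_space UNIV)"
    and indep: "prob_space.indep_vars M (\<lambda>_. count_space UNIV) X {1..}"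
    and ident: "\<And>i. i \<ge> 1 \<Longrightarrow>
                  distr M (count_space UNIV) (X i) = distr M (count_space UNIV) (X 1)"
    and p_def: "\<And>k. p k = measure M {\<omega> \<in> space M. X 1 \<omega> = k}"
    and p_pos: "\<And>k. p k > 0"
    and \<delta>_pos: "\<delta> > 0"
    and r_lim: "(\<lambda>k. rr p k) \<longlonglongrightarrow> r"
    and r_range: "r \<in> {0..1}"
  shows "(r < 1 \<longrightarrow>
            conv_in_prob M (Ssum M p X \<delta> (\<lambda>n. sqrt (ln (real n)))))
       \<and> (r = 1 \<and> \<not> summable (\<lambda>k. ee p \<delta> (Suc k)) \<longrightarrow>
            conv_in_prob M (Ssum M p X \<delta>
               (\<lambda>n. sqrt (\<Sum>k=1..mm p (real n). ee p \<delta> k))))"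
proof -
  interpret ps M X p
    by (rule ps.intro[OF assms(1) ps_axioms.intro[OF meas indep ident p_def p_pos]])
  show ?thesis
  proof (intro conjI impI)
    assume r1: "r < 1"
    obtain c where c: "c > 0" "\<And>l. rr p l \<le> 1 - c" using exists_c[OF r_lim r1] by blast
    define C where "C = 432 / sqrt (c ^ Suc \<delta>)"
    have C0: "C \<ge> 0" unfolding C_def using c by simp
    show "conv_in_prob M (Ssum M p X \<delta> (\<lambda>n. sqrt (ln (real n))))"
    proof (rule conv_generic[where A = "3 * C" and Bc = C])
      show "filterlim (\<lambda>n. ln (real n)) at_top sequentially"
        by (rule filterlim_compose[OF ln_at_top filterlim_real_sequentially])
      fix n :: nat assume n: "n \<ge> 1"
      have "(\<Sum>m. ennreal (NN n m) * hh \<delta> m) \<le> ennreal (C * (3 + ln (real n)))"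
        unfolding C_def by (rule total_a[OF c n])
      then show "(\<Sum>m. ennreal (NN n m) * hh \<delta> m) \<le> ennreal (3 * C + C * ln (real n))"
        by (simp add: algebra_simps)
    qed (use C0 in auto)
  next
    assume rb: "r = 1 \<and> \<not> summable (\<lambda>k. ee p \<delta> (Suc k))"
    obtain m0 where m0: "\<And>l. l \<ge> m0 \<Longrightarrow> 16 * Y (Suc l) \<le> Y l"
      using exists_m0 r_lim rb by blast
    define C1 where "C1 = real \<delta> ^ 2 + 2 * (2 + real \<delta>) ^ 3"
    define C2 where "C2 = C1 * real \<delta> + ((1 + real m0) ^ 3 + 2 * (2 + real m0) ^ 3)"
    have C10: "C1 \<ge> 0" unfolding C1_def by simp
    have C20: "C2 \<ge> 0" unfolding C2_def using C10 by simp
    show "conv_in_prob M (Ssum M p X \<delta> (\<lambda>n. sqrt (\<Sum>k=1..mm p (real n). ee p \<delta> k)))"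
    proof (rule conv_generic[where A = "2 * C2 * real m0 + 2 * C1 * real \<delta> * real \<delta> + C2"
          and Bc = "2 * C1 * real \<delta>"])
      show "filterlim (\<lambda>n. \<Sum>k=1..mm p (real n). ee p \<delta> k) at_top sequentially"
        using filterlim_compose[OF partial_at_top[of \<delta>] mm_at_top] rb by simp
      fix n :: nat assume n: "n \<ge> 1"
      have "(\<Sum>m. ennreal (NN n m) * hh \<delta> m)
          \<le> ennreal (2 * C2 * real m0 + 2 * C1 * real \<delta> * ((\<Sum>k=1..mm p (real n). ee p \<delta> k) + real \<delta>) + C2)"
        unfolding C1_def C2_def by (rule total_b[OF m0 \<delta>_pos n])
      then show "(\<Sum>m. ennreal (NN n m) * hh \<delta> m)
          \<le> ennreal (2 * C2 * real m0 + 2 * C1 * real \<delta> * real \<delta> + C2 + 2 * C1 * real \<delta> * (\<Sum>k=1..mm p (real n). ee p \<delta> k))"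
        by (simp add: algebra_simps)
    qed (use C10 C20 in auto)
  qed
qed


end
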